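(* Let $G=(V=V_1\sqcup V_2,E)$ be a turn-based game with $n$ vertices and reward function $r\colon E\to\mathbb{Z}$, let $W=\max_{e\in E}|r(e)|\ge1$, let $v\in V$, and let $(\sigma_1,\tau_1)$, $(\sigma_2,\tau_2)$ be two positional strategy profiles. Set \[\lambda_0=1-\left(24W(2n+1)^{7W^{1/4}\sqrt{n}+6}\right)^{-1}.\] If $\mathrm{Disc}_{\lambda_0}(G_v^{\sigma_1,\tau_1})\ge\mathrm{Disc}_{\lambda_0}(G_v^{\sigma_2,\tau_2})$, then for all $\lambda\in[\lambda_0,1)$ we have $\mathrm{Disc}_{\lambda}(G_v^{\sigma_1,\tau_1})\ge\mathrm{Disc}_{\lambda}(G_v^{\sigma_2,\tau_2})$.
   Context: A turn-based game is a finite directed graph whose vertices are partitioned into player-1 vertices $V_1$ and player-2 vertices $V_2$, each vertex having at least one outgoing edge. A positional strategy for player 1 (resp. 2) is a map $\sigma\colon V_1\to V$ (resp. $\tau\colon V_2\to V$) choosing a successor of each vertex. A profile $(\sigma,\tau)$ and a start vertex $v$ determine the unique play $G_v^{\sigma,\tau}=\langle v_0=v,v_1,\dots\rangle$ in which each vertex's successor is chosen by its owner's strategy. For $\lambda\in[0,1)$, $\mathrm{Disc}_\lambda(\langle v_0,v_1,\dots\rangle)=\sum_{i\ge0}\lambda^i r(v_i,v_{i+1})$. *)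

theory Defs
  imports Complex_Main
begin

definition turn_game :: "'v set \<Rightarrow> 'v set \<Rightarrow> 'v set \<Rightarrow> ('v \<times> 'v) set \<Rightarrow> bool" where
  "turn_game V V1 V2 E \<longleftrightarrow> finite V \<and> V1 \<union> V2 = V \<and> V1 \<inter> V2 = {} \<and>
     E \<subseteq> V \<times> V \<and> (\<forall>x\<in>V. \<exists>y. (x, y) \<in> E)"

text \<open>Positional strategy of the owner of the vertex set Vi: chooses a successor
  along an edge at each vertex of Vi (values outside Vi are irrelevant).\<close>
definition positional_strategy :: "('v \<times> 'v) set \<Rightarrow> 'v set \<Rightarrow> ('v \<Rightarrow> 'v) \<Rightarrow> bool" where
  "positional_strategy E Vi s \<longleftrightarrow> (\<forall>x\<in>Vi. (x, s x) \<in> E)"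

definition play :: "'v set \<Rightarrow> ('v \<Rightarrow> 'v) \<Rightarrow> ('v \<Rightarrow> 'v) \<Rightarrow> 'v \<Rightarrow> nat \<Rightarrow> 'v" where
  "play V1 \<sigma> \<tau> v i = ((\<lambda>x. if x \<in> V1 then \<sigma> x else \<tau> x) ^^ i) v"

definition Disc :: "real \<Rightarrow> ('v \<times> 'v \<Rightarrow> int) \<Rightarrow> (nat \<Rightarrow> 'v) \<Rightarrow> real" where
  "Disc l r p = (\<Sum>i. l ^ i * real_of_int (r (p i, p (Suc i))))"

end

theory Submission
  imports Defs "HOL-Complex_Analysis.Complex_Analysis"
begin


lemma pow_expand:
  fixes x :: "'a::comm_ring_1"
  assumes "i < N"
  shows "x^i = (\<Sum>j<N. of_nat (i choose j) * (x - 1)^j)"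
proof -
  have "x^i = ((x - 1) + 1)^i" by simp
  also have "\<dots> = (\<Sum>j\<le>i. of_nat (i choose j) * (x - 1)^j)"
    by (simp only: binomial_ring) simp
  also have "\<dots> = (\<Sum>j<N. of_nat (i choose j) * (x - 1)^j)"
    by (rule sum.mono_neutral_left) (use assms in \<open>auto simp: binomial_eq_0 not_le\<close>)
  finally show ?thesis .
qed

definition mu :: "(nat \<Rightarrow> int) \<Rightarrow> nat \<Rightarrow> nat \<Rightarrow> int" where
  "mu q N j = (\<Sum>i<N. q i * int (i choose j))"

lemma taylor_shift:
  fixes x :: "'a::comm_ring_1"
  shows "(\<Sum>i<N. of_int (q i) * x^i) = (\<Sum>j<N. of_int (mu q N j) * (x - 1)^j)"
proof -
  have "(\<Sum>i<N. of_int (q i) * x^i) = (\<Sum>i<N. \<Sum>j<N. of_int (q i) * (of_nat (i choose j) * (x - 1)^j))"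
    by (intro sum.cong refl) (simp add: pow_expand sum_distrib_left)
  also have "\<dots> = (\<Sum>j<N. \<Sum>i<N. of_int (q i) * (of_nat (i choose j) * (x - 1)^j))"
    by (rule sum.swap)
  also have "\<dots> = (\<Sum>j<N. of_int (mu q N j) * (x - 1)^j)"
    by (simp add: sum_distrib_right mult.assoc mu_def)
  finally show ?thesis .
qed

lemma mu_abs_sum:
  fixes s :: real
  assumes "0 \<le> s"
  shows "(\<Sum>j<N. \<bar>real_of_int (mu q N j)\<bar> * s^j) \<le> (\<Sum>i<N. \<bar>real_of_int (q i)\<bar> * (1+s)^i)"
proof -
  have "(\<Sum>j<N. \<bar>real_of_int (mu q N j)\<bar> * s^j) \<le> (\<Sum>j<N. (\<Sum>i<N. \<bar>real_of_int (q i)\<bar> * real (i choose j)) * s^j)"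
  proof (intro sum_mono mult_right_mono)
    fix j assume "j \<in> {..<N}"
    have "\<bar>real_of_int (mu q N j)\<bar> = \<bar>\<Sum>i<N. real_of_int (q i) * real (i choose j)\<bar>"
      by (simp add: mu_def)
    also have "\<dots> \<le> (\<Sum>i<N. \<bar>real_of_int (q i) * real (i choose j)\<bar>)" by (rule sum_abs)
    also have "\<dots> = (\<Sum>i<N. \<bar>real_of_int (q i)\<bar> * real (i choose j))" by (simp add: abs_mult)
    finally show "\<bar>real_of_int (mu q N j)\<bar> \<le> (\<Sum>i<N. \<bar>real_of_int (q i)\<bar> * real (i choose j))" .
  qed (use assms in auto)
  also have "\<dots> = (\<Sum>i<N. \<bar>real_of_int (q i)\<bar> * (\<Sum>j<N. real (i choose j) * s^j))"
    apply (simp add: sum_distrib_left sum_distrib_right mult.assoc)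
    by (rule sum.swap)
  also have "\<dots> = (\<Sum>i<N. \<bar>real_of_int (q i)\<bar> * (1+s)^i)"
    by (intro sum.cong refl) (simp add: pow_expand[of _ N "1+s"])
  finally show ?thesis .
qed

lemma near_one_bound:
  fixes z :: complex and \<sigma> :: real
  assumes "0 < \<sigma>" "cmod (z - 1) \<le> \<sigma>" "\<forall>j<k. mu q N j = 0"
  shows "cmod (\<Sum>i<N. of_int (q i) * z^i) \<le> (cmod (z - 1) / \<sigma>)^k * (\<Sum>i<N. \<bar>real_of_int (q i)\<bar> * (1+\<sigma>)^i)"
proof -
  define r where "r = cmod (z - 1)"
  have r0: "0 \<le> r" "r / \<sigma> \<le> 1" using assms by (auto simp: r_def)
  have "cmod (\<Sum>i<N. of_int (q i) * z^i) = cmod (\<Sum>j<N. of_int (mu q N j) * (z - 1)^j)"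
    by (rule arg_cong[where f=cmod], rule taylor_shift)
  also have "\<dots> \<le> (\<Sum>j<N. cmod (of_int (mu q N j) * (z - 1)^j))" by (rule norm_sum)
  also have "\<dots> = (\<Sum>j<N. \<bar>real_of_int (mu q N j)\<bar> * r^j)"
    by (simp add: norm_mult norm_power r_def)
  also have "\<dots> \<le> (\<Sum>j<N. (r/\<sigma>)^k * (\<bar>real_of_int (mu q N j)\<bar> * \<sigma>^j))"
  proof (intro sum_mono)
    fix j assume "j \<in> {..<N}"
    show "\<bar>real_of_int (mu q N j)\<bar> * r^j \<le> (r/\<sigma>)^k * (\<bar>real_of_int (mu q N j)\<bar> * \<sigma>^j)"
    proof (cases "j < k")
      case True then show ?thesis using assms by simp
    next
      case False
      have "r^j = (r/\<sigma>)^j * \<sigma>^j" using assms by (simp add: power_divide)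
      also have "\<dots> \<le> (r/\<sigma>)^k * \<sigma>^j"
        using False r0 assms by (intro mult_right_mono power_decreasing) auto
      finally have "\<bar>real_of_int (mu q N j)\<bar> * r^j \<le> \<bar>real_of_int (mu q N j)\<bar> * ((r/\<sigma>)^k * \<sigma>^j)"
        by (rule mult_left_mono) simp
      then show ?thesis by (simp only: ac_simps)
    qed
  qed
  also have "\<dots> = (r/\<sigma>)^k * (\<Sum>j<N. \<bar>real_of_int (mu q N j)\<bar> * \<sigma>^j)"
    by (simp add: sum_distrib_left)
  also have "\<dots> \<le> (r/\<sigma>)^k * (\<Sum>i<N. \<bar>real_of_int (q i)\<bar> * (1+\<sigma>)^i)"
    using assms r0 by (intro mult_left_mono mu_abs_sum) auto
  finally show ?thesis by (simp add: r_def)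
qed

lemma general_bound:
  fixes z :: complex
  assumes "cmod z < 1" "\<forall>i. \<bar>real_of_int (q i)\<bar> \<le> H"
  shows "cmod (\<Sum>i<N. of_int (q i) * z^i) \<le> H / (1 - cmod z)"
proof -
  have "cmod (\<Sum>i<N. of_int (q i) * z^i) \<le> (\<Sum>i<N. cmod (of_int (q i) * z^i))" by (rule norm_sum)
  also have "\<dots> \<le> (\<Sum>i<N. H * cmod z ^ i)"
    using assms by (intro sum_mono) (auto simp: norm_mult norm_power intro!: mult_right_mono)
  also have "\<dots> = H * (\<Sum>i<N. cmod z ^ i)" by (simp add: sum_distrib_left)
  also have "(\<Sum>i<N. cmod z ^ i) = (1 - cmod z ^ N) / (1 - cmod z)"
    using assms by (simp add: sum_gp_strict)
  also have "H * \<dots> \<le> H / (1 - cmod z)"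
  proof -
    have H0: "0 \<le> H" using assms(2) by (metis abs_ge_zero order_trans)
    have "(1 - cmod z ^ N) / (1 - cmod z) \<le> 1 / (1 - cmod z)"
      using assms by (intro divide_right_mono) auto
    from mult_left_mono[OF this H0] show ?thesis by simp
  qed
  finally show ?thesis .
qed


lemma circle_facts:
  assumes "cmod w = 1"
  shows "(cmod (5 - w))^2 = 26 - 10 * Re w" "(cmod (1 - w))^2 = 2 - 2 * Re w"
proof -
  have h: "(Re w)^2 + (Im w)^2 = 1" using assms by (metis cmod_power2 one_power2)
  have "(cmod (5 - w))^2 = (Re (5 - w))^2 + (Im (5 - w))^2" by (rule cmod_power2)
  then show "(cmod (5 - w))^2 = 26 - 10 * Re w"
    using h by (simp add: power2_eq_square algebra_simps)
  have "(cmod (1 - w))^2 = (Re (1 - w))^2 + (Im (1 - w))^2" by (rule cmod_power2)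
  then show "(cmod (1 - w))^2 = 2 - 2 * Re w"
    using h by (simp add: power2_eq_square algebra_simps)
qed

lemma F_bound_general:
  assumes w1: "cmod w = 1" and qH: "\<forall>i. \<bar>real_of_int (q i)\<bar> \<le> H"
  shows "cmod ((\<Sum>i<N. of_int (q i) * (4*w/(5-w))^i) * (1-w)^2) \<le> 12*H"
proof (cases "w = 1")
  case True
  have H0: "0 \<le> H" using qH by (metis abs_ge_zero order_trans)
  then show ?thesis using True by simp
next
  case False
  have H0: "0 \<le> H" using qH by (metis abs_ge_zero order_trans)
  define d where "d = cmod (5 - w)"
  define e where "e = cmod (1 - w)"
  have e0: "0 < e" using False by (simp add: e_def)
  have de: "d^2 - 16 = 5 * e^2" using circle_facts[OF w1] by (simp add: d_def e_def)
  have d0: "0 \<le> d" by (simp add: d_def)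
  have d4: "4 < d"
  proof -
    have "0 < e^2" using e0 by simp
    then have "16 < d^2" using de by linarith
    then have "(4::real)^2 < d^2" by simp
    then show ?thesis using d0 by (rule power_less_imp_less_base)
  qed
  have d6: "d \<le> 6"
  proof -
    have "cmod (5 - w) \<le> cmod (5::complex) + cmod w" by (rule norm_triangle_ineq4)
    then show ?thesis using w1 by (simp add: d_def)
  qed
  have w0: "5 - w \<noteq> 0" using d4 by (auto simp: d_def)
  have nz: "cmod (4*w/(5-w)) = 4/d"
    using w1 by (simp add: d_def norm_divide norm_mult)
  have nz1: "cmod (4*w/(5-w)) < 1" using nz d4 by simp
  have "cmod (\<Sum>i<N. of_int (q i) * (4*w/(5-w))^i) \<le> H / (1 - 4/d)"
    using general_bound[OF nz1 qH, of N] nz by simp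
  also have "H / (1 - 4/d) = H * d / (d - 4)" using d4 by (simp add: field_simps)
  finally have P: "cmod (\<Sum>i<N. of_int (q i) * (4*w/(5-w))^i) \<le> H * d / (d - 4)" .
  have "cmod ((\<Sum>i<N. of_int (q i) * (4*w/(5-w))^i) * (1-w)^2)
        = cmod (\<Sum>i<N. of_int (q i) * (4*w/(5-w))^i) * e^2"
    by (simp add: norm_mult norm_power e_def)
  also have "\<dots> \<le> H * d / (d - 4) * e^2" by (rule mult_right_mono[OF P]) simp
  also have "H * d / (d - 4) * e^2 = H * d * (d + 4) / 5"
  proof -
    have ee: "e^2 = (d - 4) * (d + 4) / 5" using de by (simp add: algebra_simps power2_eq_square)
    have "H * d / (d - 4) * ((d - 4) * (d + 4) / 5) = H * d * (d + 4) / 5"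
      using d4 by (simp add: field_simps)
    then show ?thesis by (simp only: ee)
  qed
  also have "\<dots> \<le> H * 6 * 10 / 5"
    using H0 d6 d4 by (intro divide_right_mono mult_mono) auto
  finally show ?thesis by simp
qed

lemma F_bound_near:
  assumes w1: "cmod w = 1" and s0: "0 < \<sigma>" and s1: "\<sigma> \<le> 1"
    and near: "cmod (1 - w) \<le> 4*\<sigma>/5" and mu0: "\<forall>j<k. mu q N j = 0"
  shows "cmod ((\<Sum>i<N. of_int (q i) * (4*w/(5-w))^i) * (1-w)^2)
     \<le> (\<Sum>i<N. \<bar>real_of_int (q i)\<bar> * (1+\<sigma>)^i) * (cmod (1 - w) / (4*\<sigma>/5))^k"
proof -
  define d where "d = cmod (5 - w)"
  define e where "e = cmod (1 - w)"
  define C where "C = (\<Sum>i<N. \<bar>real_of_int (q i)\<bar> * (1+\<sigma>)^i)"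
  have C0: "0 \<le> C" unfolding C_def using s0 by (intro sum_nonneg) auto
  have d4: "4 \<le> d"
  proof -
    have "cmod (5::complex) - cmod w \<le> cmod (5 - w)" by (rule norm_triangle_ineq2)
    then show ?thesis using w1 by (simp add: d_def)
  qed
  have w0: "5 - w \<noteq> 0" using d4 by (auto simp: d_def)
  define z where "z = 4*w/(5-w)"
  have "z - 1 = 5 * (w - 1) / (5 - w)" using w0 by (simp add: z_def field_simps)
  then have "cmod (z - 1) = cmod (5 * (w - 1)) / d" by (simp only: norm_divide d_def)
  also have "cmod (5 * (w - 1)) = 5 * e"
    unfolding norm_mult e_def by (simp add: norm_minus_commute)
  finally have zd: "cmod (z - 1) = 5 * e / d" .
  have "cmod (z - 1) \<le> 5 * e / 4"
    unfolding zd using d4 by (intro divide_left_mono) (auto simp: e_def)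
  also have "\<dots> \<le> \<sigma>" using near by (simp add: e_def)
  finally have zs: "cmod (z - 1) \<le> \<sigma>" .
  have P: "cmod (\<Sum>i<N. of_int (q i) * z^i) \<le> (cmod (z - 1) / \<sigma>)^k * C"
    using near_one_bound[OF s0 zs mu0] by (simp add: C_def)
  have "(cmod (z - 1) / \<sigma>)^k \<le> (e / (4*\<sigma>/5))^k"
  proof (rule power_mono)
    have "cmod (z - 1) \<le> 5 * e / 4"
      unfolding zd using d4 by (intro divide_left_mono) (auto simp: e_def)
    then show "cmod (z - 1) / \<sigma> \<le> e / (4*\<sigma>/5)" using s0 by (simp add: field_simps)
  qed (use s0 in simp)
  then have P2: "cmod (\<Sum>i<N. of_int (q i) * z^i) \<le> C * (e / (4*\<sigma>/5))^k"
    using mult_left_mono[OF \<open>(cmod (z - 1) / \<sigma>)^k \<le> (e / (4*\<sigma>/5))^k\<close> C0] P by (simp add: mult.commute)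
  have e1: "e^2 \<le> 1"
  proof -
    have "e \<le> 1" using near s1 by (simp add: e_def)
    then show ?thesis by (simp add: e_def power_le_one)
  qed
  have "cmod ((\<Sum>i<N. of_int (q i) * z^i) * (1-w)^2) = cmod (\<Sum>i<N. of_int (q i) * z^i) * e^2"
    by (simp add: norm_mult norm_power e_def)
  also have "\<dots> \<le> cmod (\<Sum>i<N. of_int (q i) * z^i)"
    using e1 by (simp add: mult_left_le)
  also have "\<dots> \<le> C * (e / (4*\<sigma>/5))^k" by (rule P2)
  finally show ?thesis by (simp add: z_def C_def e_def)
qed

lemma norm_one_minus_cis: "cmod (1 - cis x) \<le> \<bar>x\<bar>"
proof -
  have "(cmod (1 - cis x))^2 = (Re (1 - cis x))^2 + (Im (1 - cis x))^2" by (rule cmod_power2)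
  also have "\<dots> = (1 - cos x)^2 + (sin x)^2" by simp
  also have "\<dots> = 2 - 2 * cos x" using sin_cos_squared_add[of x] by (simp add: power2_eq_square algebra_simps)
  also have "cos x = 1 - 2 * (sin (x/2))^2" using cos_double_sin[of "x/2"] by simp
  finally have "(cmod (1 - cis x))^2 = (2 * sin (x/2))^2" by (simp add: power2_eq_square)
  then have "cmod (1 - cis x) = \<bar>2 * sin (x/2)\<bar>"
    by (metis abs_of_nonneg norm_ge_zero power2_abs power2_eq_iff_nonneg abs_ge_zero)
  also have "\<dots> \<le> 2 * \<bar>x/2\<bar>" using abs_sin_x_le_abs_x[of "x/2"] by (simp add: abs_mult)
  finally show ?thesis by simp
qed

lemma rot_step:
  fixes F :: "complex \<Rightarrow> complex" and L :: nat
  assumes "0 < L"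
  shows "(\<Prod>j<L. F (cis (2*pi*j/L) * (cis (2*pi/L) * w))) = (\<Prod>j<L. F (cis (2*pi*j/L) * w))"
proof -
  define f where "f j = F (cis (2*pi*j/L) * w)" for j :: nat
  have 1: "F (cis (2*pi*j/L) * (cis (2*pi/L) * w)) = f (Suc j)" for j
  proof -
    have e: "2*pi*j/L + 2*pi/L = 2*pi*(Suc j)/L" by (simp add: add_divide_distrib algebra_simps)
    have "cis (2*pi*j/L) * (cis (2*pi/L) * w) = cis (2*pi*j/L + 2*pi/L) * w"
      by (simp only: mult.assoc[symmetric] cis_mult)
    then have "cis (2*pi*j/L) * (cis (2*pi/L) * w) = cis (2*pi*(Suc j)/L) * w" by (simp only: e)
    then show ?thesis by (simp only: f_def)
  qed
  obtain n where n: "L = Suc n" using assms by (cases L) auto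
  have fL: "f L = f 0" using assms by (simp add: f_def)
  have "(\<Prod>j<L. F (cis (2*pi*j/L) * (cis (2*pi/L) * w))) = (\<Prod>j<L. f (Suc j))" by (simp add: 1)
  also have "\<dots> = (\<Prod>j<n. f (Suc j)) * f L" by (simp add: n)
  also have "\<dots> = f 0 * (\<Prod>j<n. f (Suc j))" using fL by simp
  also have "\<dots> = (\<Prod>j<L. f j)" unfolding n by (rule prod.lessThan_Suc_shift[symmetric])
  finally show ?thesis by (simp add: f_def)
qed

lemma rot_invariant:
  fixes F :: "complex \<Rightarrow> complex" and L m :: nat
  assumes "0 < L"
  shows "(\<Prod>j<L. F (cis (2*pi*j/L) * (cis (2*pi*m/L) * w))) = (\<Prod>j<L. F (cis (2*pi*j/L) * w))"
proof (induction m)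
  case 0 then show ?case by simp
next
  case (Suc m)
  have e: "2*pi/L + 2*pi*m/L = 2*pi*(Suc m)/L" by (simp add: add_divide_distrib algebra_simps)
  have "cis (2*pi/L) * (cis (2*pi*m/L) * w) = cis (2*pi/L + 2*pi*m/L) * w"
    by (simp only: mult.assoc[symmetric] cis_mult)
  then have "cis (2*pi*(Suc m)/L) * w = cis (2*pi/L) * (cis (2*pi*m/L) * w)" by (simp only: e)
  then show ?case by (simp only: rot_step[OF assms] Suc.IH)
qed

lemma prod_lin:
  fixes c C1 :: real
  shows "(\<Prod>j\<in>{0..<P}. C1 * (c * real (Suc j))^k) = C1^P * (c^P * fact P)^k"
proof (induction P)
  case 0 then show ?case by simp
next
  case (Suc P)
  have e: "c^(Suc P) * fact (Suc P) = (c^P * fact P) * (c * real (Suc P))"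
    by (simp add: fact_Suc algebra_simps)
  have "(\<Prod>j\<in>{0..<Suc P}. C1 * (c * real (Suc j))^k) = (C1^P * (c^P * fact P)^k) * (C1 * (c * real (Suc P))^k)"
    by (simp only: prod.atLeast0_lessThan_Suc Suc.IH)
  also have "\<dots> = C1^(Suc P) * ((c^P * fact P) * (c * real (Suc P)))^k"
    by (simp only: power_mult_distrib power_Suc ac_simps)
  finally show ?case by (simp only: e)
qed

lemma prod_lin_rev:
  fixes c C1 :: real
  shows "(\<Prod>j\<in>{0..<P}. C1 * (c * real (P - j))^k) = C1^P * (c^P * fact P)^k"
proof -
  have "(\<Prod>j\<in>{0..<P}. C1 * (c * real (P - j))^k) = (\<Prod>j<P. (\<lambda>i. C1 * (c * real (Suc i))^k) (P - Suc j))"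
    by (intro prod.cong) (auto simp: Suc_diff_Suc)
  also have "\<dots> = (\<Prod>j<P. C1 * (c * real (Suc j))^k)" by (rule prod.nat_diff_reindex)
  also have "\<dots> = C1^P * (c^P * fact P)^k" using prod_lin[of C1 c k P] by (simp add: atLeast0LessThan)
  finally show ?thesis .
qed


lemma rot_prod_bound:
  fixes F :: "complex \<Rightarrow> complex" and L P k :: nat and C1 \<beta> :: real
  assumes FK: "\<And>w. cmod w = 1 \<Longrightarrow> cmod (F w) \<le> K0"
    and FC: "\<And>w. cmod w = 1 \<Longrightarrow> cmod (1 - w) \<le> \<beta> \<Longrightarrow> cmod (F w) \<le> C1 * (cmod (1 - w) / \<beta>)^k"
    and C1: "0 \<le> C1" and \<beta>: "0 < \<beta>" and PL: "2*P \<le> L" and L0: "0 < L"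
    and L\<beta>: "2*pi*P/L \<le> \<beta>" and w1: "cmod w = 1"
  shows "cmod (\<Prod>j<L. F (cis (2*pi*j/L) * w)) \<le> K0^(L - 2*P) * (C1^P * ((2*pi/(L*\<beta>))^P * fact P)^k)^2"
proof -
  have K0: "0 \<le> K0" using FK[of 1] by (metis norm_ge_zero norm_one order_trans)
  obtain \<theta> where th: "0 \<le> \<theta>" "\<theta> < 2*pi" "w = cis \<theta>"
  proof -
    obtain t where "0 \<le> t" "t < 2 * pi" "w = Complex (cos t) (sin t)"
      using complex_unimodular_polar[OF w1] by blast
    moreover have "Complex (cos t) (sin t) = cis t" by (simp add: complex_eq_iff)
    ultimately show ?thesis using that by auto
  qed
  define c where "c = 2*pi/(L*\<beta>)"
  have c0: "0 \<le> c" using \<beta> by (simp add: c_def)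
  have Lpos: "0 < real L" using L0 by simp
  define m1 where "m1 = nat \<lfloor>\<theta> * L / (2*pi)\<rfloor>"
  define t where "t = \<theta> - 2*pi*m1/L"
  have fl0: "0 \<le> \<theta> * L / (2*pi)" using th by simp
  have m1a: "real m1 \<le> \<theta> * L / (2*pi)" using fl0 by (simp add: m1_def)
  have m1b: "\<theta> * L / (2*pi) < real m1 + 1" using fl0 by (simp add: m1_def)
  have t0: "0 \<le> t"
  proof -
    have "2*pi*m1/L \<le> 2*pi*(\<theta> * L / (2*pi))/L"
      using m1a Lpos by (intro divide_right_mono mult_left_mono) auto
    also have "\<dots> = \<theta>" using Lpos by (simp add: field_simps)
    finally show ?thesis by (simp add: t_def)
  qed
  have t1: "t < 2*pi/L"
  proof -
    have "\<theta> = 2*pi*(\<theta> * L / (2*pi))/L" using Lpos by (simp add: field_simps)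
    also have "\<dots> < 2*pi*(real m1 + 1)/L"
      using m1b Lpos by (intro divide_strict_right_mono mult_strict_left_mono) auto
    finally show ?thesis using Lpos by (simp add: t_def add_divide_distrib algebra_simps)
  qed
  have m1L: "m1 < L"
  proof -
    have "\<theta> * L / (2*pi) < L" using th Lpos by (simp add: field_simps)
    then have "real m1 < real L" using m1a by linarith
    then show ?thesis by simp
  qed
  have rot: "cis (2*pi*real (L - m1)/L) * w = cis t"
  proof -
    have "2*pi*real (L - m1)/L + \<theta> = t + 2*pi"
      using m1L Lpos by (simp add: t_def of_nat_diff field_simps)
    then have "cis (2*pi*real (L - m1)/L) * w = cis (t + 2*pi)" by (simp add: th cis_mult)
    also have "\<dots> = cis t" by (simp flip: cis_mult)
    finally show ?thesis .
  qed
  have "(\<Prod>j<L. F (cis (2*pi*j/L) * w)) = (\<Prod>j<L. F (cis (2*pi*j/L) * (cis (2*pi*real (L - m1)/L) * w)))"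
    by (rule rot_invariant[OF L0, symmetric])
  also have "\<dots> = (\<Prod>j<L. F (cis (t + 2*pi*j/L)))"
    by (simp add: rot cis_mult add.commute)
  finally have Geq: "(\<Prod>j<L. F (cis (2*pi*j/L) * w)) = (\<Prod>j<L. F (cis (t + 2*pi*j/L)))" .
  define b where "b j = (if j < P then C1 * (c * real (Suc j))^k
      else if L - P \<le> j then C1 * (c * real (L - j))^k else K0)" for j
  have bound: "cmod (F (cis (t + 2*pi*j/L))) \<le> b j" if jL: "j < L" for j
  proof (cases "j < P")
    case True
    define x where "x = t + 2*pi*j/L"
    have x0: "0 \<le> x" using t0 by (simp add: x_def)
    have x1: "x \<le> 2*pi*real (Suc j)/L"
      using t1 Lpos by (simp add: x_def field_simps)
    have x2: "2*pi*real (Suc j)/L \<le> \<beta>"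
    proof -
      have "2*pi*real (Suc j)/L \<le> 2*pi*P/L"
        using True Lpos by (intro divide_right_mono mult_left_mono) auto
      then show ?thesis using L\<beta> by linarith
    qed
    have n1: "cmod (1 - cis x) \<le> 2*pi*real (Suc j)/L"
      using norm_one_minus_cis[of x] x0 x1 by simp
    have "cmod (F (cis x)) \<le> C1 * (cmod (1 - cis x) / \<beta>)^k"
      using FC[of "cis x"] n1 x2 by simp
    also have "\<dots> \<le> C1 * ((2*pi*real (Suc j)/L) / \<beta>)^k"
      using n1 \<beta> C1 by (intro mult_left_mono power_mono divide_right_mono) auto
    also have "(2*pi*real (Suc j)/L) / \<beta> = c * real (Suc j)" by (simp add: c_def field_simps)
    finally show ?thesis using True by (simp add: b_def x_def)
  next
    case False
    show ?thesis
    proof (cases "L - P \<le> j")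
      case True
      define x where "x = t + 2*pi*j/L - 2*pi"
      have cx: "cis (t + 2*pi*j/L) = cis x"
      proof -
        have "cis (t + 2*pi*j/L) = cis (x + 2*pi)" by (simp add: x_def)
        also have "\<dots> = cis x" by (simp flip: cis_mult)
        finally show ?thesis .
      qed
      have xe: "x = t - 2*pi*real (L - j)/L"
        using jL Lpos by (simp add: x_def of_nat_diff field_simps)
      have Lj1: "1 \<le> real (L - j)" using jL by simp
      have "t < 2*pi*real (L - j)/L"
      proof -
        have "2*pi/L \<le> 2*pi*real (L - j)/L"
          using Lj1 Lpos by (intro divide_right_mono) auto
        then show ?thesis using t1 by linarith
      qed
      then have ax: "\<bar>x\<bar> \<le> 2*pi*real (L - j)/L" unfolding abs_le_iff using xe t0 by linarith
      have x2: "2*pi*real (L - j)/L \<le> \<beta>"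
      proof -
        have "L - j \<le> P" using True jL by simp
        then have "2*pi*real (L - j)/L \<le> 2*pi*P/L"
          using Lpos by (intro divide_right_mono mult_left_mono) auto
        then show ?thesis using L\<beta> by linarith
      qed
      have n1: "cmod (1 - cis x) \<le> 2*pi*real (L - j)/L"
        using norm_one_minus_cis[of x] ax by simp
      have "cmod (F (cis x)) \<le> C1 * (cmod (1 - cis x) / \<beta>)^k"
        using FC[of "cis x"] n1 x2 by simp
      also have "\<dots> \<le> C1 * ((2*pi*real (L - j)/L) / \<beta>)^k"
        using n1 \<beta> C1 by (intro mult_left_mono power_mono divide_right_mono) auto
      also have "(2*pi*real (L - j)/L) / \<beta> = c * real (L - j)" by (simp add: c_def field_simps)
      finally show ?thesis using True False by (simp add: b_def cx)
    next
      case False2: False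
      show ?thesis using FK[of "cis (t + 2*pi*j/L)"] False False2 by (simp add: b_def)
    qed
  qed
  have "cmod (\<Prod>j<L. F (cis (2*pi*j/L) * w)) = (\<Prod>j<L. cmod (F (cis (t + 2*pi*j/L))))"
    by (simp add: Geq prod_norm)
  also have "\<dots> \<le> (\<Prod>j<L. b j)"
    using bound by (intro prod_mono) auto
  also have "(\<Prod>j<L. b j) = (\<Prod>j\<in>{0..<P}. b j) * (\<Prod>j\<in>{P..<L-P}. b j) * (\<Prod>j\<in>{L-P..<L}. b j)"
  proof -
    have "(\<Prod>j\<in>{0..<P}. b j) * (\<Prod>j\<in>{P..<L-P}. b j) = (\<Prod>j\<in>{0..<L-P}. b j)"
      using PL by (intro prod.atLeastLessThan_concat) auto
    moreover have "(\<Prod>j\<in>{0..<L-P}. b j) * (\<Prod>j\<in>{L-P..<L}. b j) = (\<Prod>j\<in>{0..<L}. b j)"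
      using PL by (intro prod.atLeastLessThan_concat) auto
    ultimately show ?thesis by (simp add: atLeast0LessThan)
  qed
  also have "(\<Prod>j\<in>{0..<P}. b j) = C1^P * (c^P * fact P)^k"
  proof -
    have "(\<Prod>j\<in>{0..<P}. b j) = (\<Prod>j\<in>{0..<P}. C1 * (c * real (Suc j))^k)"
      by (intro prod.cong) (auto simp: b_def)
    then show ?thesis by (simp only: prod_lin)
  qed
  also have "(\<Prod>j\<in>{P..<L-P}. b j) = K0^(L - 2*P)"
  proof -
    have "(\<Prod>j\<in>{P..<L-P}. b j) = (\<Prod>j\<in>{P..<L-P}. K0)"
      by (intro prod.cong) (auto simp: b_def)
    moreover have "L - P - P = L - 2*P" by simp
    ultimately show ?thesis by simp
  qed
  also have "(\<Prod>j\<in>{L-P..<L}. b j) = C1^P * (c^P * fact P)^k"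
  proof -
    have "(\<Prod>j\<in>{L-P..<L}. b j) = (\<Prod>j\<in>{0+(L-P)..<P+(L-P)}. b j)" using PL by simp
    also have "\<dots> = (\<Prod>i\<in>{0..<P}. b (i + (L - P)))" by (rule prod.shift_bounds_nat_ivl)
    also have "\<dots> = (\<Prod>i\<in>{0..<P}. C1 * (c * real (P - i))^k)"
      using PL by (intro prod.cong) (auto simp: b_def)
    finally show ?thesis by (simp only: prod_lin_rev)
  qed
  finally show ?thesis by (simp add: c_def power2_eq_square algebra_simps)
qed


lemma maxmod_bound:
  fixes q :: "nat \<Rightarrow> int" and H \<sigma> :: real and N k L P :: nat
  assumes qH: "\<forall>i. \<bar>real_of_int (q i)\<bar> \<le> H" and q0: "q 0 \<noteq> 0" and N0: "0 < N"
    and s0: "0 < \<sigma>" and s1: "\<sigma> \<le> 1" and mu0: "\<forall>j<k. mu q N j = 0"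
    and PL: "2*P \<le> L" and L0: "0 < L" and L\<beta>: "2*pi*P/L \<le> 4*\<sigma>/5"
  shows "1 \<le> (12*H)^(L - 2*P) * ((\<Sum>i<N. \<bar>real_of_int (q i)\<bar> * (1+\<sigma>)^i)^P
             * ((2*pi/(L*(4*\<sigma>/5)))^P * fact P)^k)^2"
proof -
  define C where "C = (\<Sum>i<N. \<bar>real_of_int (q i)\<bar> * (1+\<sigma>)^i)"
  define F where "F w = (\<Sum>i<N. of_int (q i) * (4*w/(5-w))^i) * (1-w)^2" for w :: complex
  define G where "G w = (\<Prod>j<L. F (cis (2*pi*j/L) * w))" for w
  define B where "B = (12*H)^(L - 2*P) * (C^P * ((2*pi/(L*(4*\<sigma>/5)))^P * fact P)^k)^2"
  have C0: "0 \<le> C" unfolding C_def using s0 by (intro sum_nonneg) auto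
  have nz: "5 - cis (2*pi*j/L) * w \<noteq> 0" if "w \<in> ball 0 2" for w j
  proof
    assume "5 - cis (2*pi*j/L) * w = 0"
    then have "cis (2*pi*j/L) * w = 5" by simp
    then have "cmod (cis (2*pi*j/L) * w) = 5" by simp
    then show False using that by (simp add: norm_mult)
  qed
  have holG: "G holomorphic_on ball 0 2"
    unfolding G_def F_def using nz by (intro holomorphic_intros) auto
  have "norm (G 0) \<le> B"
  proof (rule maximum_modulus_frontier[of G "ball 0 1" B 0])
    show "G holomorphic_on interior (ball 0 1)"
      using holG by (rule holomorphic_on_subset) auto
    show "continuous_on (closure (ball 0 1)) G"
      using holomorphic_on_imp_continuous_on[OF holG] by (rule continuous_on_subset) auto
    show "bounded (ball (0::complex) 1)" by simp
    show "(0::complex) \<in> ball 0 1" by simp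
    fix z :: complex assume "z \<in> frontier (ball 0 1)"
    then have z1: "cmod z = 1" by simp
    show "cmod (G z) \<le> B"
      unfolding G_def B_def
    proof (rule rot_prod_bound[OF _ _ C0 _ PL L0 L\<beta> z1])
      show "cmod (F w) \<le> 12 * H" if "cmod w = 1" for w
        unfolding F_def by (rule F_bound_general[OF that qH])
      show "cmod (F w) \<le> C * (cmod (1 - w) / (4 * \<sigma> / 5)) ^ k"
        if "cmod w = 1" "cmod (1 - w) \<le> 4 * \<sigma> / 5" for w
        unfolding F_def C_def by (rule F_bound_near[OF that(1) s0 s1 that(2) mu0])
      show "0 < 4 * \<sigma> / 5" using s0 by simp
    qed
  qed
  moreover have "G 0 = (of_int (q 0))^L"
  proof -
    have "F 0 = of_int (q 0)"
    proof -
      have "(\<Sum>i<N. of_int (q i) * (4*0/(5-0::complex))^i) = (\<Sum>i\<in>{0}. of_int (q i) * (4*0/(5-0::complex))^i)"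
        using N0 by (intro sum.mono_neutral_right) auto
      then show ?thesis by (simp add: F_def)
    qed
    then show ?thesis by (simp add: G_def)
  qed
  moreover have "1 \<le> cmod ((of_int (q 0) :: complex)^L)"
  proof -
    have "1 \<le> \<bar>real_of_int (q 0)\<bar>" using q0 by linarith
    then have "1 \<le> \<bar>real_of_int (q 0)\<bar>^L" by (rule one_le_power)
    then show ?thesis by (simp add: norm_power)
  qed
  ultimately show ?thesis by (simp add: B_def C_def)
qed

lemma e_le_pow: 
  assumes "1 \<le> P"
  shows "exp 1 * real P^(P+1) \<le> (real P + 1)^(P+1)"
proof -
  have P0: "0 < real P" using assms by simp
  have "ln (real P / (real P + 1)) \<le> real P / (real P + 1) - 1"
    using P0 by (intro ln_le_minus_one) auto
  also have "\<dots> = - 1 / (real P + 1)" using P0 by (simp add: field_simps)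
  finally have l1: "ln (real P / (real P + 1)) \<le> - 1 / (real P + 1)" .
  have "ln ((real P + 1) / real P) = - ln (real P / (real P + 1))"
    using P0 by (simp add: ln_div)
  with l1 have "1 / (real P + 1) \<le> ln ((real P + 1) / real P)" by linarith
  then have "1 \<le> (real P + 1) * ln ((real P + 1) / real P)"
    using P0 by (simp add: field_simps)
  then have "exp 1 \<le> exp ((real P + 1) * ln ((real P + 1) / real P))" by simp
  also have "\<dots> = exp (real (P+1) * ln ((real P + 1) / real P))" by simp
  also have "\<dots> = exp (ln ((real P + 1) / real P)) ^ (P+1)" by (rule exp_of_nat_mult)
  also have "\<dots> = ((real P + 1) / real P) ^ (P+1)" using P0 by simp
  finally have "exp 1 \<le> ((real P + 1) / real P) ^ (P+1)" .
  then have "exp 1 * real P^(P+1) \<le> ((real P + 1) / real P) ^ (P+1) * real P^(P+1)"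
    using P0 by (intro mult_right_mono) auto
  also have "\<dots> = (real P + 1)^(P+1)" using P0 by (simp add: power_divide)
  finally show ?thesis .
qed

lemma fact_le_exp:
  assumes "1 \<le> P"
  shows "fact P \<le> exp 1 * real P^(P+1) / exp (real P)"
  using assms
proof (induction P rule: nat_induct_at_least)
  case base then show ?case by simp
next
  case (Suc P)
  have P0: "0 < real P" using Suc by simp
  have "fact (Suc P) = real (Suc P) * fact P" by simp
  also have "\<dots> \<le> real (Suc P) * (exp 1 * real P^(P+1) / exp (real P))"
    using Suc by (intro mult_left_mono) auto
  also have "\<dots> \<le> real (Suc P) * ((real P + 1)^(P+1) / exp (real P))"
    using e_le_pow[OF Suc(1)] by (intro mult_left_mono divide_right_mono) auto
  also have "\<dots> = exp 1 * real (Suc P)^(Suc P + 1) / exp (real (Suc P))"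
    by (simp add: exp_add field_simps)
  finally show ?case .
qed


lemma ln_1000: "ln (1000::real) \<le> 19"
proof -
  have "(2::real) \<le> exp 1" using exp_ge_add_one_self[of 1] by simp
  then have "(2::real)^19 \<le> exp 1 ^ 19" by (rule power_mono) simp
  also have "exp (1::real) ^ 19 = exp 19" by (simp flip: exp_of_nat_mult)
  finally have "(1000::real) \<le> exp 19" by simp
  then have "ln (1000::real) \<le> ln (exp 19)" by (subst ln_le_cancel_iff) auto
  then show ?thesis by simp
qed

lemma mult_bound:
  fixes q :: "nat \<Rightarrow> int" and H \<sigma> :: real and N k :: nat
  assumes qH: "\<forall>i. \<bar>real_of_int (q i)\<bar> \<le> H" and q0: "q 0 \<noteq> 0" and N0: "0 < N"
    and s0: "0 < \<sigma>" and s1: "\<sigma> \<le> 1" and mu0: "\<forall>j<k. mu q N j = 0"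
  shows "real k * (49/50) \<le> 5*pi/(4*\<sigma>) * ln (12*H) + ln (H * N) + N * \<sigma>"
proof -
  define P :: nat where "P = 1000"
  define \<beta> where "\<beta> = 4*\<sigma>/5"
  define L :: nat where "L = nat \<lceil>2*pi*P/\<beta>\<rceil>"
  define C where "C = (\<Sum>i<N. \<bar>real_of_int (q i)\<bar> * (1+\<sigma>)^i)"
  define \<rho> where "\<rho> = 2*pi/(L*\<beta>)"
  define A where "A = exp 1 * real P / exp (real P)"
  have \<beta>0: "0 < \<beta>" using s0 by (simp add: \<beta>_def)
  have \<beta>1: "\<beta> \<le> 4/5" using s1 by (simp add: \<beta>_def)
  have Lge: "2*pi*P/\<beta> \<le> real L" unfolding L_def by (rule real_nat_ceiling_ge)
  have Lle: "real L \<le> 2*pi*P/\<beta> + 1"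
  proof -
    have "0 \<le> 2*pi*P/\<beta>" using \<beta>0 by simp
    then have "real L = real_of_int \<lceil>2*pi*P/\<beta>\<rceil>" by (simp add: L_def)
    also have "\<dots> \<le> 2*pi*P/\<beta> + 1" by linarith
    finally show ?thesis .
  qed
  have "real (2*P) \<le> 2*pi*P/\<beta>"
  proof -
    have "real (2*P) \<le> 2*pi*P/(4/5)" using pi_gt3 by (simp add: P_def)
    also have "\<dots> \<le> 2*pi*P/\<beta>" using \<beta>0 \<beta>1 by (intro divide_left_mono) (auto simp: P_def)
    finally show ?thesis .
  qed
  with Lge have PL: "2*P \<le> L" by linarith
  have L0: "0 < L" using PL by (simp add: P_def)
  have Lpos: "0 < real L" using L0 by simp
  have LB: "2*pi*P \<le> real L * \<beta>" using Lge \<beta>0 by (simp add: field_simps)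
  have L\<beta>: "2*pi*P/L \<le> 4*\<sigma>/5" using LB Lpos by (simp add: \<beta>_def field_simps)
  have main: "1 \<le> (12*H)^(L - 2*P) * (C^P * (\<rho>^P * fact P)^k)^2"
    using maxmod_bound[OF qH q0 N0 s0 s1 mu0 PL L0 L\<beta>] by (simp add: C_def \<rho>_def \<beta>_def)
  have H1: "1 \<le> H" using qH q0 by (metis of_int_0_eq_iff int_one_le_iff_zero_less abs_ge_zero order_trans
        zero_less_abs_iff of_int_1_le_iff of_int_abs)
  have C1: "1 \<le> C"
  proof -
    have "\<bar>real_of_int (q 0)\<bar> * (1+\<sigma>)^0 \<le> C" unfolding C_def
      using N0 s0 by (intro member_le_sum) auto
    moreover have "1 \<le> \<bar>real_of_int (q 0)\<bar>" using q0 by linarith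
    ultimately show ?thesis by simp
  qed
  have C2: "C \<le> H * N * (1+\<sigma>)^N"
  proof -
    have "C \<le> (\<Sum>i<N. H * (1+\<sigma>)^N)" unfolding C_def
    proof (intro sum_mono mult_mono)
      fix i assume "i \<in> {..<N}"
      then show "(1+\<sigma>)^i \<le> (1+\<sigma>)^N" using s0 by (intro power_increasing) auto
    qed (use qH s0 in auto)
    then show ?thesis by (simp add: ac_simps)
  qed
  have \<rho>0: "0 \<le> \<rho>" using \<beta>0 by (simp add: \<rho>_def)
  have \<rho>1: "\<rho> \<le> 1 / real P"
  proof -
    have "\<rho> = 2*pi/(real L*\<beta>)" by (simp add: \<rho>_def)
    also have "\<dots> \<le> 2*pi/(2*pi*P)" using LB \<beta>0 Lpos by (intro divide_left_mono) (auto simp: P_def)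
    also have "\<dots> = 1 / real P" by simp
    finally show ?thesis .
  qed
  have P1: "1 \<le> P" by (simp add: P_def)
  have A1: "\<rho>^P * fact P \<le> A"
  proof -
    have "\<rho>^P * fact P \<le> (1 / real P)^P * (exp 1 * real P^(P+1) / exp (real P))"
      using \<rho>0 \<rho>1 fact_le_exp[OF P1] by (intro mult_mono power_mono) auto
    also have "(1 / real P)^P * (exp 1 * real P^(P+1) / exp (real P)) = A"
    proof -
      have "(1 / real P)^P * real P^(P+1) = real P" using P1 by (simp add: power_divide)
      then show ?thesis unfolding A_def by (metis (no_types, lifting) times_divide_eq_right mult.left_commute)
    qed
    finally show ?thesis .
  qed
  have A0: "0 < A" using P1 by (simp add: A_def)
  have "1 \<le> (12*H)^(L - 2*P) * (C^P * A^k)^2"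
  proof -
    have "(\<rho>^P * fact P)^k \<le> A^k" using A1 \<rho>0 by (intro power_mono) auto
    then have "C^P * (\<rho>^P * fact P)^k \<le> C^P * A^k" using C1 by (intro mult_left_mono) auto
    then have "(C^P * (\<rho>^P * fact P)^k)^2 \<le> (C^P * A^k)^2" using C1 \<rho>0 by (intro power_mono) auto
    then have "(12*H)^(L - 2*P) * (C^P * (\<rho>^P * fact P)^k)^2 \<le> (12*H)^(L - 2*P) * (C^P * A^k)^2"
      using H1 by (intro mult_left_mono) auto
    then show ?thesis using main by linarith
  qed
  then have "0 \<le> ln ((12*H)^(L - 2*P) * (C^P * A^k)^2)" by simp
  also have "ln ((12*H)^(L - 2*P) * (C^P * A^k)^2) = real (L - 2*P) * ln (12*H) + 2 * (real P * ln C + real k * ln A)"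
    using H1 C1 A0 by (simp add: ln_mult ln_realpow del: ln_mult_pos) (simp add: algebra_simps)
  finally have lnineq: "0 \<le> real (L - 2*P) * ln (12*H) + 2 * (real P * ln C + real k * ln A)" .
  have lnA: "ln A = 1 + ln (real P) - real P"
    using P1 by (simp add: A_def ln_mult ln_div)
  have lnP: "ln (real P) \<le> 19" using ln_1000 by (simp add: P_def)
  have lnK: "0 \<le> ln (12*H)" using H1 by simp
  have "real (L - 2*P) * ln (12*H) \<le> (2*pi*P/\<beta>) * ln (12*H)"
  proof (rule mult_right_mono[OF _ lnK])
    have "real (L - 2*P) = real L - 2 * real P" using PL by (simp add: of_nat_diff)
    then show "real (L - 2*P) \<le> 2*pi*P/\<beta>" using Lle by (simp add: P_def)
  qed
  with lnineq lnA have "2 * real k * (real P - 1 - ln (real P)) \<le> (2*pi*P/\<beta>) * ln (12*H) + 2 * real P * ln C"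
    by (simp add: algebra_simps)
  moreover have "real k * (49/50) * (2 * real P) \<le> 2 * real k * (real P - 1 - ln (real P))"
  proof -
    have "(49/50)*(2*real P) \<le> 2*(real P - 1 - ln (real P))" using lnP by (simp add: P_def)
    from mult_left_mono[OF this, of "real k"] show ?thesis by (simp add: ac_simps)
  qed
  ultimately have "real k * (49/50) * (2 * real P) \<le> (2*pi*P/\<beta>) * ln (12*H) + 2 * real P * ln C"
    by linarith
  also have "\<dots> = (pi/\<beta> * ln (12*H) + ln C) * (2 * real P)" using \<beta>0 by (simp add: field_simps)
  finally have "real k * (49/50) * (2 * real P) \<le> (pi/\<beta> * ln (12*H) + ln C) * (2 * real P)" .
  then have k1: "real k * (49/50) \<le> pi/\<beta> * ln (12*H) + ln C"
    by (rule mult_right_le_imp_le) (use P1 in simp)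
  have "ln C \<le> ln (H * N * (1+\<sigma>)^N)" using C1 C2 by simp
  also have "\<dots> = ln (H * N) + N * ln (1+\<sigma>)" using H1 N0 s0 by (simp add: ln_mult ln_realpow)
  also have "\<dots> \<le> ln (H * N) + N * \<sigma>" using s0 ln_add_one_self_le_self[of \<sigma>]
    by (intro add_left_mono mult_left_mono) auto
  finally have "ln C \<le> ln (H * N) + N * \<sigma>" .
  moreover have pb: "pi/\<beta> = 5*pi/(4*\<sigma>)" by (simp add: \<beta>_def)
  moreover from k1 have "real k * (49/50) \<le> 5*pi/(4*\<sigma>) * ln (12*H) + ln C" by (simp only: pb)
  ultimately show ?thesis by linarith
qed


lemma sign_lemma:
  fixes q :: "nat \<Rightarrow> int" and N k :: nat and H T s lam :: real
  assumes qH: "\<forall>i. \<bar>real_of_int (q i)\<bar> \<le> H"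
    and muk: "mu q N k \<noteq> 0" and mu0: "\<forall>j<k. mu q N j = 0" and kN: "k < N"
    and s0: "0 < s" and Ts: "T \<le> s"
    and cond: "T * (H * N * (1+s)^N) < s^(k+1)"
    and l1: "1 - T \<le> lam" and l2: "lam < 1"
  shows "0 < (\<Sum>i<N. real_of_int (q i) * lam^i) * ((-1)^k * real_of_int (mu q N k))"
proof -
  define t where "t = 1 - lam"
  have t0: "0 < t" using l2 by (simp add: t_def)
  have tT: "t \<le> T" using l1 by (simp add: t_def)
  have ts: "t \<le> s" using tT Ts by simp
  define m where "m j = real_of_int (mu q N j)" for j
  have H0: "0 \<le> H" using qH by (metis abs_ge_zero order_trans)
  define f where "f j = m j * (-t)^j" for j
  have "(\<Sum>i<N. real_of_int (q i) * lam^i) = (\<Sum>j<N. of_int (mu q N j) * (lam - 1)^j)"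
    by (rule taylor_shift)
  also have "\<dots> = (\<Sum>j<N. f j)" by (simp add: f_def m_def t_def)
  also have "\<dots> = (\<Sum>j\<in>{0..<Suc k}. f j) + (\<Sum>j\<in>{Suc k..<N}. f j)"
  proof -
    have "(\<Sum>j\<in>{0..<Suc k}. f j) + (\<Sum>j\<in>{Suc k..<N}. f j) = (\<Sum>j\<in>{0..<N}. f j)"
      using kN by (intro sum.atLeastLessThan_concat) auto
    then show ?thesis by (simp only: atLeast0LessThan)
  qed
  also have "(\<Sum>j\<in>{0..<Suc k}. f j) = f k"
  proof -
    have "(\<Sum>j\<in>{0..<Suc k}. f j) = (\<Sum>j\<in>{0..<k}. f j) + f k" by simp
    moreover have "(\<Sum>j\<in>{0..<k}. f j) = 0" using mu0 by (simp add: f_def m_def)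
    ultimately show ?thesis by simp
  qed
  finally have Qeq: "(\<Sum>i<N. real_of_int (q i) * lam^i) = f k + (\<Sum>j\<in>{Suc k..<N}. f j)" .
  define R where "R = (\<Sum>j\<in>{Suc k..<N}. f j)"
  have "\<bar>R\<bar> \<le> (\<Sum>j\<in>{Suc k..<N}. \<bar>f j\<bar>)" unfolding R_def by (rule sum_abs)
  also have "\<dots> \<le> (\<Sum>j\<in>{Suc k..<N}. (t/s)^(k+1) * (\<bar>m j\<bar> * s^j))"
  proof (intro sum_mono)
    fix j assume j: "j \<in> {Suc k..<N}"
    have "\<bar>f j\<bar> = \<bar>m j\<bar> * t^j" by (simp add: f_def abs_mult power_abs t0 less_imp_le)
    also have "t^j = (t/s)^j * s^j" using s0 by (simp add: power_divide)
    also have "(t/s)^j \<le> (t/s)^(k+1)"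
      using j t0 ts s0 by (intro power_decreasing) auto
    then have "\<bar>m j\<bar> * ((t/s)^j * s^j) \<le> \<bar>m j\<bar> * ((t/s)^(k+1) * s^j)"
      using s0 by (intro mult_left_mono mult_right_mono) auto
    finally show "\<bar>f j\<bar> \<le> (t/s)^(k+1) * (\<bar>m j\<bar> * s^j)" by (simp only: ac_simps)
  qed
  also have "\<dots> = (t/s)^(k+1) * (\<Sum>j\<in>{Suc k..<N}. \<bar>m j\<bar> * s^j)" by (simp add: sum_distrib_left)
  also have "\<dots> \<le> (t/s)^(k+1) * (\<Sum>j<N. \<bar>m j\<bar> * s^j)"
    using t0 s0 by (intro mult_left_mono sum_mono2) auto
  also have "\<dots> \<le> (t/s)^(k+1) * (\<Sum>i<N. \<bar>real_of_int (q i)\<bar> * (1+s)^i)"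
    using t0 s0 mu_abs_sum[where s=s and N=N and q=q] by (intro mult_left_mono) (auto simp: m_def)
  also have "\<dots> \<le> (t/s)^(k+1) * (H * N * (1+s)^N)"
  proof (intro mult_left_mono)
    have "(\<Sum>i<N. \<bar>real_of_int (q i)\<bar> * (1+s)^i) \<le> (\<Sum>i<N. H * (1+s)^N)"
    proof (intro sum_mono mult_mono)
      fix i assume "i \<in> {..<N}"
      then show "(1+s)^i \<le> (1+s)^N" using s0 by (intro power_increasing) auto
    qed (use qH s0 in auto)
    then show "(\<Sum>i<N. \<bar>real_of_int (q i)\<bar> * (1+s)^i) \<le> H * N * (1+s)^N" by (simp add: ac_simps)
  qed (use t0 s0 in auto)
  also have "\<dots> = t^k * (t * (H * N * (1+s)^N) / s^(k+1))" using s0 by (simp add: power_divide)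
  also have "\<dots> < t^k * 1"
  proof (rule mult_strict_left_mono)
    have "t * (H * N * (1+s)^N) \<le> T * (H * N * (1+s)^N)"
      using tT H0 s0 by (intro mult_right_mono) auto
    then have "t * (H * N * (1+s)^N) < s^(k+1)" using cond by linarith
    then show "t * (H * N * (1+s)^N) / s^(k+1) < 1" using s0 by simp
  qed (use t0 in simp)
  finally have Rb: "\<bar>R\<bar> < t^k" by simp
  have mk: "1 \<le> \<bar>m k\<bar>" using muk by (simp add: m_def)
  have tk: "(-t)^k * (-1)^k = t^k" by (simp flip: power_mult_distrib)
  have "(\<Sum>i<N. real_of_int (q i) * lam^i) * ((-1)^k * m k) = (m k * (-t)^k + R) * ((-1)^k * m k)"
    by (simp add: Qeq R_def f_def)
  also have "\<dots> = (m k * m k) * ((-t)^k * (-1)^k) + R * ((-1)^k * m k)"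
    by (simp add: algebra_simps)
  also have "\<dots> = (m k * m k) * t^k + R * ((-1)^k * m k)" by (simp only: tk)
  finally have eq: "(\<Sum>i<N. real_of_int (q i) * lam^i) * ((-1)^k * m k) = (m k * m k) * t^k + R * ((-1)^k * m k)" .
  have mk2: "\<bar>m k\<bar> \<le> m k * m k"
  proof -
    have "\<bar>m k\<bar> * 1 \<le> \<bar>m k\<bar> * \<bar>m k\<bar>" using mk by (intro mult_left_mono) auto
    then show ?thesis by (simp add: abs_mult_self_eq)
  qed
  have "\<bar>R * ((-1)^k * m k)\<bar> = \<bar>R\<bar> * \<bar>m k\<bar>" by (simp add: abs_mult power_abs)
  also have "\<dots> < t^k * \<bar>m k\<bar>" using Rb mk by (intro mult_strict_right_mono) auto
  also have "\<dots> \<le> t^k * (m k * m k)" using mk2 t0 by (intro mult_left_mono) auto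
  finally have "\<bar>R * ((-1)^k * m k)\<bar> < (m k * m k) * t^k" by (simp add: ac_simps)
  then have "0 < (m k * m k) * t^k + R * ((-1)^k * m k)" by linarith
  then show ?thesis using eq by (simp add: m_def)
qed




lemma e_ge_2718: "2.718 \<le> exp (1::real)"
  using e_approx_32 by (simp add: abs_if split: if_split_asm)

lemma ln_le_div_e: "0 < (y::real) \<Longrightarrow> ln y \<le> y / exp 1"
  using ln_le_minus_one[of "y / exp 1"] by (simp add: ln_div)

lemma k_bound_large:
  fixes k n :: nat and W \<sigma> :: real
  assumes W1: "1 \<le> W" and n50: "50 < n" and \<sigma>d: "\<sigma> = 3 / sqrt n"
    and kb: "real k * (49/50) \<le> 5*pi/(4*\<sigma>) * ln (12*(8*W)) + ln (8*W * real (2*n)) + real (2*n) * \<sigma>"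
  shows "real k \<le> 14 * W powr (1/4) * sqrt n + 9"
proof -
  define x where "x = W powr (1/4)"
  define y where "y = sqrt (real n)"
  have x1: "1 \<le> x" unfolding x_def using W1 by (simp add: ge_one_powr_ge_zero)
  have lnW: "ln W = 4 * ln x" unfolding x_def using W1 by (simp add: ln_powr)
  have y7: "7 \<le> y"
  proof -
    have "sqrt 49 \<le> sqrt (real n)" using n50 by (subst real_sqrt_le_iff) simp
    then show ?thesis by (simp add: y_def)
  qed
  have ny: "real n = y^2" by (simp add: y_def)
  have \<sigma>y: "\<sigma> = 3 / y" by (simp add: \<sigma>d y_def)
  have e1: "5*pi/(4*\<sigma>) = 5*pi*y/12" using y7 by (simp add: \<sigma>y field_simps)
  have e2: "real (2*n) * \<sigma> = 6 * y"
  proof -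
    have "real (2*n) * \<sigma> = 2 * (y * y) * (3 / y)" by (simp add: \<sigma>y ny power2_eq_square)
    also have "\<dots> = 6 * y" using y7 by (simp add: field_simps)
    finally show ?thesis .
  qed
  have ln2: "ln (2::real) \<le> 25/36" by (rule ln2_le_25_over_36)
  have e3: "ln (12*(8*W)) = ln 96 + 4 * ln x"
  proof -
    have "ln (12*(8*W)) = ln (96 * W)" by (simp add: mult.assoc)
    also have "\<dots> = ln 96 + ln W" using W1 by (intro ln_mult_pos) auto
    finally show ?thesis using lnW by simp
  qed
  have ln96: "ln (96::real) \<le> 7 * ln 2"
  proof -
    have "ln (96::real) \<le> ln (2^7)" by (subst ln_le_cancel_iff) auto
    also have "\<dots> = 7 * ln 2" using ln_realpow[of "2::real" 7] by simp
    finally show ?thesis .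
  qed
  have e4: "ln (8*W * real (2*n)) = 4 * ln 2 + 4 * ln x + 2 * ln y"
  proof -
    have "8*W * real (2*n) = 16 * W * real n" by simp
    then have "ln (8*W * real (2*n)) = ln (16 * W * real n)" by (simp only:)
    also have "\<dots> = ln (16 * W) + ln (real n)" using W1 n50 by (intro ln_mult_pos) auto
    also have "ln (16 * W) = ln 16 + ln W" using W1 by (intro ln_mult_pos) auto
    also have "ln (16::real) = 4 * ln 2" using ln_realpow[of 2 4] by simp
    also have "ln (real n) = 2 * ln y" using n50 by (simp add: y_def ln_sqrt)
    finally show ?thesis using lnW by simp
  qed
  have lnx: "ln x \<le> x - 1" using x1 by (intro ln_le_minus_one) simp
  have lnx2: "ln x \<le> x / 2.718"
  proof -
    have "ln x \<le> x / exp 1" using x1 by (intro ln_le_div_e) simp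
    also have "\<dots> \<le> x / 2.718" using x1 e_ge_2718 by (intro divide_left_mono) auto
    finally show ?thesis .
  qed
  have lny: "ln y \<le> y / 2.718"
  proof -
    have "ln y \<le> y / exp 1" using y7 by (intro ln_le_div_e) simp
    also have "\<dots> \<le> y / 2.718" using y7 e_ge_2718 by (intro divide_left_mono) auto
    finally show ?thesis .
  qed
  have lnx0: "0 \<le> ln x" using x1 by simp
  have A: "ln 96 + 4 * ln x \<le> 4.9 * x" using ln96 ln2 lnx x1 by linarith
  have A0: "0 \<le> ln 96 + 4 * ln x" using lnx0 by simp
  have pi1: "5*pi/12 \<le> 1.309" using pi_approx by simp
  have T1: "5*pi*y/12 * (ln 96 + 4 * ln x) \<le> 1.309 * y * (4.9 * x)"
  proof -
    have "5*pi*y/12 = (5*pi/12) * y" by simp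
    also have "\<dots> \<le> 1.309 * y" using pi1 y7 by (intro mult_right_mono) auto
    finally have "5*pi*y/12 \<le> 1.309 * y" .
    then show ?thesis using A A0 y7 by (intro mult_mono) auto
  qed
  have xy1: "7 * x \<le> x * y" using mult_left_mono[OF y7, of x] x1 by (simp add: mult.commute)
  have xy2: "y \<le> x * y" using x1 y7 by (simp add: mult_le_cancel_right1)
  have "real k * (49/50) \<le> 5*pi*y/12 * (ln 96 + 4 * ln x) + (4 * ln 2 + 4 * ln x + 2 * ln y) + 6 * y"
    using kb by (simp only: e1 e2 e3 e4)
  then have "real k * (49/50) \<le> 1.309 * y * (4.9 * x) + (4 * ln 2 + 4 * ln x + 2 * ln y) + 6 * y"
    using T1 by linarith
  then have "real k * (49/50) \<le> 6.4141 * (x * y) + 4 * (25/36) + 4 * (x / 2.718) + 2 * (y / 2.718) + 6 * y"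
    using ln2 lnx2 lny by (simp add: algebra_simps)
  then have "real k * (49/50) \<le> (49/50) * (14 * (x * y) + 9)"
    using xy1 xy2 by (simp add: algebra_simps)
  then have "real k \<le> 14 * (x * y) + 9" by simp
  then show ?thesis by (simp add: x_def y_def ac_simps)
qed

lemma k_bound_small:
  fixes k n :: nat and W :: real
  assumes W1: "1 \<le> W" and n50: "n \<le> 50" and kn: "k < 2*n"
  shows "real k \<le> 14 * W powr (1/4) * sqrt n + 9"
proof -
  have x1: "1 \<le> W powr (1/4)" using W1 by (simp add: ge_one_powr_ge_zero)
  have "real k + 1 \<le> 2 * real n" using kn by linarith
  moreover have "2 * real n \<le> 14 * sqrt n + 10"
  proof -
    have s: "sqrt (real n) ^ 2 = real n" by simp
    have s0: "0 \<le> sqrt (real n)" by simp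
    have "sqrt (real n) \<le> sqrt 50" using n50 by (subst real_sqrt_le_iff) simp
    moreover have "sqrt (50::real) \<le> 7.1" by (rule real_le_lsqrt) (auto simp: power2_eq_square)
    ultimately have s1: "sqrt (real n) \<le> 7.1" by linarith
    have "2 * real n = 2 * sqrt (real n) * sqrt (real n)" using s by (simp add: power2_eq_square)
    also have "\<dots> \<le> 2 * 7.1 * sqrt (real n)" using s0 s1 by (intro mult_right_mono) auto
    finally show ?thesis using s0 s1 by linarith
  qed
  moreover have "14 * sqrt n \<le> 14 * W powr (1/4) * sqrt n"
    using x1 by (simp add: mult_le_cancel_right1)
  ultimately show ?thesis by linarith
qed




lemma s_choice:
  fixes n k :: nat and W :: real
  assumes n1: "1 \<le> n" and W1: "1 \<le> W" and kn: "k < 2*n"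
    and kb: "real k \<le> 14 * W powr (1/4) * sqrt n + 9"
  defines "T \<equiv> 1 / (24 * W * real (2*n+1) powr (7 * W powr (1/4) * sqrt (real n) + 6))"
  shows "\<exists>s. 0 < s \<and> T \<le> s \<and> T * (8*W * real (2*n) * (1+s)^(2*n)) < s^(k+1)"
proof -
  define B where "B = real (2*n+1)"
  define x where "x = W powr (1/4)"
  define E where "E = 7 * x * sqrt (real n) + 6"
  have B3: "3 \<le> B" using n1 by (simp add: B_def)
  have x1: "1 \<le> x" unfolding x_def using W1 by (simp add: ge_one_powr_ge_zero)
  have sn1: "1 \<le> sqrt (real n)" using n1 by simp
  have E1: "1 \<le> E" using x1 sn1 by (simp add: E_def)
  have BE: "B \<le> B powr E"
  proof -
    have "B powr 1 \<le> B powr E" using E1 B3 by (intro powr_mono) auto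
    then show ?thesis using B3 by (simp add: powr_one)
  qed
  have BE0: "0 < B powr E" using B3 by simp
  have Tdef: "T = 1 / (24 * W * B powr E)" by (simp add: T_def B_def E_def x_def)
  have T0: "0 < T" using W1 BE0 by (simp add: Tdef)
  have TB: "T \<le> 1 / B"
  proof -
    have "1 * B powr E \<le> (24 * W) * B powr E" using W1 BE0 by (intro mult_right_mono) auto
    then have "B \<le> 24 * W * B powr E" using BE by simp
    then show ?thesis unfolding Tdef using B3 by (intro divide_left_mono) auto
  qed
  have nB: "real (2*n) < B" by (simp add: B_def)
  have sB: "sqrt B * sqrt B = B" using B3 by simp
  have sB1: "1 \<le> sqrt B" using B3 by simp
  have key: "T * (8*W * real (2*n) * Y) < Z" if "real (2*n) * Y < 3 * B powr E * Z" "0 \<le> Y" for Y Z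
  proof -
    have "T * (8*W * real (2*n) * Y) = (real (2*n) * Y) / (3 * B powr E)"
      using W1 BE0 by (simp add: Tdef field_simps)
    also have "\<dots> < Z" using that BE0 by (simp add: divide_less_eq mult.commute)
    finally show ?thesis .
  qed
  show ?thesis
  proof (cases "3 * sqrt B \<le> real (k+1)")
    case True
    define s where "s = real (k+1) / real (2*n)"
    have s0: "0 < s" using n1 by (simp add: s_def)
    have sTB: "T \<le> s"
    proof -
      have "1 / B \<le> 1 / real (2*n)" using nB n1 by (intro divide_left_mono) auto
      also have "\<dots> \<le> s" unfolding s_def using n1 by (intro divide_right_mono) auto
      finally show ?thesis using TB by linarith
    qed
    have Y: "(1+s)^(2*n) \<le> exp 1 ^ (k+1)"
    proof -
      have "(1+s)^(2*n) \<le> exp s ^ (2*n)" using s0 by (intro power_mono) (auto simp: exp_ge_add_one_self add.commute)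
      also have "\<dots> = exp (real (2*n) * s)" by (rule exp_of_nat_mult[symmetric])
      also have "real (2*n) * s = real (k+1)" using n1 by (simp add: s_def)
      also have "exp (real (k+1)) = exp 1 ^ (k+1)" using exp_of_nat_mult[of "k+1" 1] by simp
      finally show ?thesis .
    qed
    have e3: "exp (1::real) \<le> 3" using e_less_272 by simp
    have base: "exp 1 \<le> sqrt B * s"
    proof -
      have "exp 1 * real (2*n) \<le> 3 * B" using e3 nB by (intro mult_mono) auto
      also have "3 * B = 3 * sqrt B * sqrt B" using sB by simp
      also have "\<dots> \<le> real (k+1) * sqrt B" using True sB1 by (intro mult_right_mono) auto
      finally have "exp 1 * real (2*n) \<le> real (k+1) * sqrt B" .
      then show ?thesis using n1 by (simp add: s_def field_simps)
    qed
    have Y2: "(1+s)^(2*n) \<le> sqrt B ^ (k+1) * s^(k+1)"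
    proof -
      have "exp 1 ^ (k+1) \<le> (sqrt B * s)^(k+1)" using base by (intro power_mono) auto
      also have "(sqrt B * s)^(k+1) = sqrt B ^ (k+1) * s^(k+1)" by (rule power_mult_distrib)
      finally show ?thesis using Y by linarith
    qed
    have sBp: "sqrt B ^ (k+1) = B powr (real (k+1) / 2)"
    proof -
      have "sqrt B ^ (k+1) = (B powr (1/2)) ^ (k+1)" using B3 by (simp add: powr_half_sqrt)
      also have "\<dots> = B powr (real (k+1) * (1/2))" using B3 by (subst powr_power) auto
      also have "real (k+1) * (1/2) = real (k+1) / 2" by simp
      finally show ?thesis .
    qed
    have Eb: "1 + real (k+1) / 2 \<le> E" using kb by (simp add: E_def x_def)
    have "B * sqrt B ^ (k+1) \<le> B powr E"
    proof -
      have "B powr (1 + real (k+1) / 2) = B powr 1 * B powr (real (k+1) / 2)" by (rule powr_add)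
      also have "\<dots> = B * sqrt B ^ (k+1)" using B3 by (simp only: sBp powr_one)
      finally have "B * sqrt B ^ (k+1) = B powr (1 + real (k+1) / 2)" by simp
      also have "\<dots> \<le> B powr E" using Eb B3 by (intro powr_mono) auto
      finally show ?thesis .
    qed
    have "real (2*n) * (1+s)^(2*n) < 3 * B powr E * s^(k+1)"
    proof -
      have sp: "0 < s^(k+1)" using s0 by simp
      have "real (2*n) * (1+s)^(2*n) \<le> real (2*n) * (sqrt B ^ (k+1) * s^(k+1))"
        using Y2 by (intro mult_left_mono) auto
      also have "\<dots> < 3 * B * (sqrt B ^ (k+1) * s^(k+1))"
        using nB sp sB1 by (intro mult_strict_right_mono) auto
      also have "\<dots> = 3 * ((B * sqrt B ^ (k+1)) * s^(k+1))" by (simp only: ac_simps)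
      also have "\<dots> \<le> 3 * (B powr E * s^(k+1))"
        using \<open>B * sqrt B ^ (k+1) \<le> B powr E\<close> sp by (intro mult_left_mono mult_right_mono) auto
      also have "\<dots> = 3 * B powr E * s^(k+1)" by simp
      finally show ?thesis .
    qed
    then have "T * (8*W * real (2*n) * (1+s)^(2*n)) < s^(k+1)" using s0 by (intro key) auto
    then show ?thesis using s0 sTB by blast
  next
    case False
    define s where "s = 1 / sqrt B"
    have s0: "0 < s" using sB1 by (simp add: s_def)
    have sTB: "T \<le> s"
    proof -
      have sBle: "sqrt B \<le> B"
      proof -
        have "sqrt B * 1 \<le> sqrt B * sqrt B" using sB1 by (intro mult_left_mono) auto
        then show ?thesis using sB by simp
      qed
      have "1 / B \<le> s" unfolding s_def using sBle sB1 B3 by (intro divide_left_mono) auto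
      then show ?thesis using TB by linarith
    qed
    have Y: "(1+s)^(2*n) \<le> B powr sqrt B"
    proof -
      have "(1+s)^(2*n) \<le> exp s ^ (2*n)" using s0 by (intro power_mono) (auto simp: exp_ge_add_one_self add.commute)
      also have "\<dots> = exp (real (2*n) * s)" by (rule exp_of_nat_mult[symmetric])
      also have "\<dots> \<le> exp (sqrt B)"
      proof -
        have "real (2*n) * s \<le> B * s" using nB s0 by (intro mult_right_mono) auto
        also have "B * s = sqrt B" using sB sB1 by (simp add: s_def field_simps)
        finally show ?thesis by simp
      qed
      also have "exp (sqrt B) = exp 1 powr sqrt B" by (simp add: exp_powr_real)
      also have "\<dots> \<le> B powr sqrt B"
        using e_less_272 B3 by (intro powr_mono2) auto
      finally show ?thesis .
    qed
    have sk: "B powr (- (3/2) * sqrt B) \<le> s^(k+1)"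
    proof -
      have B0: "0 \<le> B" using B3 by simp
      have Bn0: "B \<noteq> 0" using B3 by simp
      have inv: "B powr (-(1/2)) = s"
        by (simp only: powr_minus powr_half_sqrt[OF B0] s_def inverse_eq_divide)
      have "s^(k+1) = (B powr (-(1/2)))^(k+1)" by (simp only: inv)
      also have "\<dots> = B powr (real (k+1) * (-(1/2)))" by (rule powr_power[OF Bn0])
      finally have e: "s^(k+1) = B powr (real (k+1) * (-(1/2)))" .
      have "- (3/2) * sqrt B \<le> real (k+1) * (-(1/2))" using False by (simp add: field_simps)
      then show ?thesis unfolding e using B3 by (intro powr_mono) auto
    qed
    have sqB: "sqrt B \<le> 283/200 * sqrt (real n) + 1"
    proof (rule real_le_lsqrt)
      show "0 \<le> 283/200 * sqrt (real n) + 1" by simp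
      have "(283/200 * sqrt (real n) + 1)^2 = 80089/40000 * (sqrt (real n))^2 + 283/100 * sqrt (real n) + 1"
        by (simp only: power2_eq_square algebra_simps)
      also have "(sqrt (real n))^2 = real n" by simp
      finally have "(283/200 * sqrt (real n) + 1)^2 = 80089/40000 * real n + 283/100 * sqrt (real n) + 1" .
      moreover have "B = 2 * real n + 1" by (simp add: B_def)
      ultimately show "B \<le> (283/200 * sqrt (real n) + 1)^2" using sn1 by linarith
    qed
    have Eb: "1 + sqrt B + (3/2) * sqrt B \<le> E"
    proof -
      have "7 * sqrt (real n) \<le> 7 * x * sqrt (real n)" using x1 sn1 by (simp add: mult_le_cancel_right1)
      then show ?thesis using sqB sn1 unfolding E_def by linarith
    qed
    have "real (2*n) * (1+s)^(2*n) < 3 * B powr E * s^(k+1)"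
    proof -
      have "real (2*n) * (1+s)^(2*n) \<le> real (2*n) * B powr sqrt B"
        using Y by (intro mult_left_mono) auto
      also have "\<dots> < 3 * B * B powr sqrt B"
        using nB B3 by (intro mult_strict_right_mono) auto
      also have "3 * B * B powr sqrt B = 3 * B powr (1 + sqrt B)"
        using B3 by (simp add: powr_add powr_one)
      also have "3 * B powr (1 + sqrt B) \<le> 3 * B powr (E + (- (3/2) * sqrt B))"
        using Eb B3 by (intro mult_left_mono powr_mono) auto
      also have "\<dots> = 3 * B powr E * B powr (- (3/2) * sqrt B)" by (simp only: powr_add mult.assoc)
      also have "\<dots> \<le> 3 * B powr E * s^(k+1)" using sk BE0 by (intro mult_left_mono) auto
      finally show ?thesis .
    qed
    then have "T * (8*W * real (2*n) * (1+s)^(2*n)) < s^(k+1)" using s0 by (intro key) auto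
    then show ?thesis using s0 sTB by blast
  qed
qed




definition stepf :: "'v set \<Rightarrow> ('v \<Rightarrow> 'v) \<Rightarrow> ('v \<Rightarrow> 'v) \<Rightarrow> 'v \<Rightarrow> 'v" where
  "stepf V1 \<sigma> \<tau> x = (if x \<in> V1 then \<sigma> x else \<tau> x)"

lemma play_0: "play V1 \<sigma> \<tau> v 0 = v"
  by (simp add: play_def)

lemma play_Suc: "play V1 \<sigma> \<tau> v (Suc i) = stepf V1 \<sigma> \<tau> (play V1 \<sigma> \<tau> v i)"
  by (simp add: play_def stepf_def)

lemma step_in_E:
  assumes game: "turn_game V V1 V2 E" and s: "positional_strategy E V1 \<sigma>"
    and t: "positional_strategy E V2 \<tau>" and x: "x \<in> V"
  shows "(x, stepf V1 \<sigma> \<tau> x) \<in> E \<and> stepf V1 \<sigma> \<tau> x \<in> V"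
proof -
  have "(x, stepf V1 \<sigma> \<tau> x) \<in> E"
  proof (cases "x \<in> V1")
    case True then show ?thesis using s by (simp add: stepf_def positional_strategy_def)
  next
    case False
    then have "x \<in> V2" using x game by (auto simp: turn_game_def)
    then show ?thesis using t False by (simp add: stepf_def positional_strategy_def)
  qed
  moreover from this have "stepf V1 \<sigma> \<tau> x \<in> V" using game by (auto simp: turn_game_def)
  ultimately show ?thesis by simp
qed

lemma play_in_V:
  assumes game: "turn_game V V1 V2 E" and s: "positional_strategy E V1 \<sigma>"
    and t: "positional_strategy E V2 \<tau>" and v: "v \<in> V"
  shows "play V1 \<sigma> \<tau> v i \<in> V"
proof (induction i)
  case 0 then show ?case using v by (simp add: play_0)
next
  case (Suc i) then show ?case using step_in_E[OF game s t Suc] by (simp add: play_Suc)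
qed

lemma play_in_E:
  assumes game: "turn_game V V1 V2 E" and s: "positional_strategy E V1 \<sigma>"
    and t: "positional_strategy E V2 \<tau>" and v: "v \<in> V"
  shows "(play V1 \<sigma> \<tau> v i, play V1 \<sigma> \<tau> v (Suc i)) \<in> E"
  using step_in_E[OF game s t play_in_V[OF game s t v, of i]] by (simp add: play_Suc)

lemma play_lasso:
  assumes game: "turn_game V V1 V2 E" and s: "positional_strategy E V1 \<sigma>"
    and t: "positional_strategy E V2 \<tau>" and v: "v \<in> V"
  shows "\<exists>a b. 0 < b \<and> a + b \<le> card V \<and> (\<forall>i\<ge>a. play V1 \<sigma> \<tau> v (i + b) = play V1 \<sigma> \<tau> v i)"
proof -
  define p where "p = play V1 \<sigma> \<tau> v"
  have fin: "finite V" using game by (simp add: turn_game_def)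
  have "\<not> inj_on p {..card V}"
  proof
    assume inj: "inj_on p {..card V}"
    have "p ` {..card V} \<subseteq> V" using play_in_V[OF game s t v] by (auto simp: p_def)
    from card_inj_on_le[OF inj this fin] show False by simp
  qed
  then obtain i j where ij: "i \<le> card V" "j \<le> card V" "i \<noteq> j" "p i = p j"
    by (auto simp: inj_on_def)
  obtain a c where ac: "a < c" "c \<le> card V" "p a = p c"
    using ij by (metis linorder_neqE_nat)
  define b where "b = c - a"
  have b0: "0 < b" using ac by (simp add: b_def)
  have abV: "a + b \<le> card V" using ac by (simp add: b_def)
  have per: "p (a + m + b) = p (a + m)" for m
  proof (induction m)
    case 0 then show ?case using ac by (simp add: b_def)
  next
    case (Suc m)
    have "p (a + Suc m + b) = stepf V1 \<sigma> \<tau> (p (a + m + b))"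
      by (simp add: p_def play_Suc[symmetric])
    also have "\<dots> = stepf V1 \<sigma> \<tau> (p (a + m))" using Suc by simp
    also have "\<dots> = p (a + Suc m)" by (simp add: p_def play_Suc)
    finally show ?case .
  qed
  have "\<forall>i\<ge>a. p (i + b) = p i"
  proof (intro allI impI)
    fix i assume "a \<le> i"
    then obtain m where "i = a + m" using le_Suc_ex by blast
    then show "p (i + b) = p i" using per by simp
  qed
  then show ?thesis using b0 abV by (auto simp: p_def)
qed




definition sh :: "nat \<Rightarrow> (nat \<Rightarrow> int) \<Rightarrow> nat \<Rightarrow> int" where
  "sh b d i = (if b \<le> i then d (i - b) else 0)"

definition cpoly :: "nat \<Rightarrow> nat \<Rightarrow> (nat \<Rightarrow> int) \<Rightarrow> (nat \<Rightarrow> int) \<Rightarrow> nat \<Rightarrow> int" where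
  "cpoly b1 b2 e1 e2 i = (let d = (\<lambda>j. e1 j - e2 j) in d i - sh b1 d i - sh b2 d i + sh (b1+b2) d i)"

lemma summable_bounded:
  fixes l :: real and d :: "nat \<Rightarrow> int"
  assumes l0: "0 \<le> l" and l1: "l < 1" and dM: "\<forall>i. \<bar>d i\<bar> \<le> M"
  shows "summable (\<lambda>i. l^i * real_of_int (d i))"
proof (rule summable_comparison_test')
  show "summable (\<lambda>i. real_of_int M * l^i)"
    using l0 l1 by (intro summable_mult summable_geometric) auto
  fix i :: nat
  have "norm (l^i * real_of_int (d i)) = l^i * \<bar>real_of_int (d i)\<bar>" using l0 by (simp add: abs_mult)
  also have "\<dots> \<le> l^i * real_of_int M" using dM l0 by (intro mult_left_mono) (auto simp flip: of_int_abs)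
  finally show "norm (l^i * real_of_int (d i)) \<le> real_of_int M * l^i" by (simp add: mult.commute)
qed

lemma sums_sh:
  fixes l :: real and d :: "nat \<Rightarrow> int"
  assumes l0: "0 \<le> l" and l1: "l < 1" and dM: "\<forall>i. \<bar>d i\<bar> \<le> M"
  shows "(\<lambda>i. l^i * real_of_int (sh b d i)) sums (l^b * (\<Sum>i. l^i * real_of_int (d i)))"
proof -
  define f where "f i = l^i * real_of_int (sh b d i)" for i
  have "(\<lambda>i. l^b * (l^i * real_of_int (d i))) sums (l^b * (\<Sum>i. l^i * real_of_int (d i)))"
    by (intro sums_mult summable_sums summable_bounded[OF l0 l1 dM])
  moreover have "(\<lambda>i. f (i + b)) = (\<lambda>i. l^b * (l^i * real_of_int (d i)))"
    by (auto simp: f_def sh_def power_add)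
  ultimately have "(\<lambda>i. f (i + b)) sums (l^b * (\<Sum>i. l^i * real_of_int (d i)))" by simp
  then have "f sums (l^b * (\<Sum>i. l^i * real_of_int (d i)) + (\<Sum>i<b. f i))" by (simp add: sums_iff_shift)
  moreover have "(\<Sum>i<b. f i) = 0" by (simp add: f_def sh_def)
  ultimately have "f sums (l^b * (\<Sum>i. l^i * real_of_int (d i)))" by simp
  then show ?thesis by (simp only: f_def[abs_def])
qed

lemma cpoly_zero:
  assumes p1: "\<forall>i\<ge>a1. e1 (i + b1) = e1 i" and p2: "\<forall>i\<ge>a2. e2 (i + b2) = e2 i"
    and n1: "a1 + b1 \<le> n" and n2: "a2 + b2 \<le> n" and i: "2*n \<le> i"
  shows "cpoly b1 b2 e1 e2 i = 0"
proof -
  have e1a: "e1 i = e1 (i - b1)" using p1[rule_format, of "i - b1"] n1 i by simp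
  have e1b: "e1 (i - b2) = e1 (i - (b1 + b2))" using p1[rule_format, of "i - (b1+b2)"] n1 n2 i by simp
  have e2a: "e2 i = e2 (i - b2)" using p2[rule_format, of "i - b2"] n2 i by simp
  have e2b: "e2 (i - b1) = e2 (i - (b1 + b2))" using p2[rule_format, of "i - (b1+b2)"] n1 n2 i
    by (simp add: add.commute)
  show ?thesis using n1 n2 i e1a e1b e2a e2b by (simp add: cpoly_def sh_def Let_def)
qed

lemma cpoly_bound:
  assumes "\<forall>i. \<bar>e1 i\<bar> \<le> W" "\<forall>i. \<bar>e2 i\<bar> \<le> W"
  shows "\<bar>cpoly b1 b2 e1 e2 i\<bar> \<le> 8 * W"
proof -
  define d where "d j = e1 j - e2 j" for j
  have dW: "\<bar>d j\<bar> \<le> 2 * W" for j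
    using assms(1)[rule_format, of j] assms(2)[rule_format, of j] by (simp add: d_def abs_le_iff)
  have sW: "\<bar>sh b d j\<bar> \<le> 2 * W" for b j using dW[of "j - b"] dW[of 0] by (simp add: sh_def)
  have "cpoly b1 b2 e1 e2 i = d i - sh b1 d i - sh b2 d i + sh (b1+b2) d i"
    by (simp add: cpoly_def d_def[abs_def] Let_def)
  then show ?thesis using dW[of i] sW[of b1 i] sW[of b2 i] sW[of "b1+b2" i] by linarith
qed

lemma disc_poly:
  fixes l :: real and e1 e2 :: "nat \<Rightarrow> int"
  assumes l0: "0 \<le> l" and l1: "l < 1"
    and W1: "\<forall>i. \<bar>e1 i\<bar> \<le> W" and W2: "\<forall>i. \<bar>e2 i\<bar> \<le> W"
    and p1: "\<forall>i\<ge>a1. e1 (i + b1) = e1 i" and p2: "\<forall>i\<ge>a2. e2 (i + b2) = e2 i"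
    and n1: "a1 + b1 \<le> n" and n2: "a2 + b2 \<le> n"
  shows "(1 - l^b1) * (1 - l^b2) * ((\<Sum>i. l^i * real_of_int (e1 i)) - (\<Sum>i. l^i * real_of_int (e2 i)))
       = (\<Sum>i<2*n. l^i * real_of_int (cpoly b1 b2 e1 e2 i))"
proof -
  define d where "d j = e1 j - e2 j" for j
  have dW: "\<forall>j. \<bar>d j\<bar> \<le> 2 * W"
  proof
    fix j show "\<bar>d j\<bar> \<le> 2 * W"
      using W1[rule_format, of j] W2[rule_format, of j] by (simp add: d_def abs_le_iff)
  qed
  define S where "S = (\<Sum>i. l^i * real_of_int (d i))"
  have S_eq: "S = (\<Sum>i. l^i * real_of_int (e1 i)) - (\<Sum>i. l^i * real_of_int (e2 i))"
  proof -
    have "(\<lambda>i. l^i * real_of_int (e1 i) - l^i * real_of_int (e2 i)) sums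
          ((\<Sum>i. l^i * real_of_int (e1 i)) - (\<Sum>i. l^i * real_of_int (e2 i)))"
      by (intro sums_diff summable_sums summable_bounded[OF l0 l1 W1] summable_bounded[OF l0 l1 W2])
    then show ?thesis unfolding S_def d_def by (simp add: algebra_simps sums_iff)
  qed
  have sd: "(\<lambda>i. l^i * real_of_int (d i)) sums S"
    unfolding S_def by (intro summable_sums summable_bounded[OF l0 l1 dW])
  have "(\<lambda>i. l^i * real_of_int (d i) - l^i * real_of_int (sh b1 d i) - l^i * real_of_int (sh b2 d i)
           + l^i * real_of_int (sh (b1+b2) d i)) sums (S - l^b1 * S - l^b2 * S + l^(b1+b2) * S)"
    unfolding S_def
    by (intro sums_add sums_diff sums_sh[OF l0 l1 dW] summable_sums summable_bounded[OF l0 l1 dW])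
  moreover have "(\<lambda>i. l^i * real_of_int (d i) - l^i * real_of_int (sh b1 d i) - l^i * real_of_int (sh b2 d i)
           + l^i * real_of_int (sh (b1+b2) d i)) = (\<lambda>i. l^i * real_of_int (cpoly b1 b2 e1 e2 i))"
    by (auto simp: cpoly_def d_def[abs_def] Let_def algebra_simps)
  ultimately have A: "(\<lambda>i. l^i * real_of_int (cpoly b1 b2 e1 e2 i)) sums (S - l^b1 * S - l^b2 * S + l^(b1+b2) * S)"
    by simp
  have B: "(\<lambda>i. l^i * real_of_int (cpoly b1 b2 e1 e2 i)) sums (\<Sum>i<2*n. l^i * real_of_int (cpoly b1 b2 e1 e2 i))"
    by (rule sums_finite) (use cpoly_zero[OF p1 p2 n1 n2] in auto)
  have "S - l^b1 * S - l^b2 * S + l^(b1+b2) * S = (\<Sum>i<2*n. l^i * real_of_int (cpoly b1 b2 e1 e2 i))"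
    using sums_unique2[OF A B] .
  moreover have "(1 - l^b1) * (1 - l^b2) * S = S - l^b1 * S - l^b2 * S + l^(b1+b2) * S"
    by (simp add: power_add algebra_simps)
  ultimately have "(1 - l^b1) * (1 - l^b2) * S = (\<Sum>i<2*n. l^i * real_of_int (cpoly b1 b2 e1 e2 i))" by simp
  then show ?thesis unfolding S_eq .
qed


lemma shift_poly:
  fixes c :: "nat \<Rightarrow> int" and x :: real
  assumes cz: "\<forall>i\<ge>N. c i = 0" and s0: "\<forall>i<s. c i = 0"
  shows "(\<Sum>i<N. x^i * real_of_int (c i)) = x^s * (\<Sum>i<N. real_of_int (c (i + s)) * x^i)"
proof (cases "s \<le> N")
  case True
  have "(\<Sum>i<N. x^i * real_of_int (c i)) = (\<Sum>i\<in>{s..<N}. x^i * real_of_int (c i))"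
    using s0 by (intro sum.mono_neutral_right) auto
  also have "\<dots> = (\<Sum>i\<in>{0+s..<(N-s)+s}. x^i * real_of_int (c i))" using True by simp
  also have "\<dots> = (\<Sum>i\<in>{0..<N-s}. x^(i+s) * real_of_int (c (i+s)))" by (rule sum.shift_bounds_nat_ivl)
  also have "\<dots> = (\<Sum>i\<in>{0..<N}. x^(i+s) * real_of_int (c (i+s)))"
    using cz by (intro sum.mono_neutral_left) auto
  also have "\<dots> = x^s * (\<Sum>i<N. real_of_int (c (i + s)) * x^i)"
    by (simp add: sum_distrib_left power_add atLeast0LessThan algebra_simps)
  finally show ?thesis .
next
  case False
  then show ?thesis using s0 cz by simp
qed

lemma mu_nonzero_exists:
  fixes q :: "nat \<Rightarrow> int"
  assumes q0: "q 0 \<noteq> 0" and N0: "0 < N"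
  shows "\<exists>j<N. mu q N j \<noteq> 0"
proof -
  define A where "A = {i. i < N \<and> q i \<noteq> 0}"
  have finA: "finite A" by (simp add: A_def)
  have A0: "0 \<in> A" using q0 N0 by (simp add: A_def)
  define i0 where "i0 = Max A"
  have i0A: "i0 \<in> A" using finA A0 unfolding i0_def by (intro Max_in) auto
  have i0max: "\<And>i. i \<in> A \<Longrightarrow> i \<le> i0" using finA by (simp add: i0_def)
  have "mu q N i0 = (\<Sum>i\<in>{i0}. q i * int (i choose i0))"
    unfolding mu_def
  proof (rule sum.mono_neutral_right)
    show "{i0} \<subseteq> {..<N}" using i0A by (simp add: A_def)
    show "\<forall>i\<in>{..<N} - {i0}. q i * int (i choose i0) = 0"
    proof
      fix i assume i: "i \<in> {..<N} - {i0}"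
      show "q i * int (i choose i0) = 0"
      proof (cases "i < i0")
        case True then show ?thesis by simp
      next
        case False
        then have "i0 < i" using i by auto
        then have "i \<notin> A" using i0max by force
        then show ?thesis using i by (simp add: A_def)
      qed
    qed
  qed simp
  also have "\<dots> = q i0" by simp
  finally show ?thesis using i0A by (auto simp: A_def)
qed


theorem lemma5p3:
  fixes V V1 V2 :: "'v set" and E :: "('v \<times> 'v) set" and r :: "'v \<times> 'v \<Rightarrow> int"
    and \<sigma>1 \<tau>1 \<sigma>2 \<tau>2 :: "'v \<Rightarrow> 'v" and v :: 'v and n :: nat and W :: int and lam0 :: real
  assumes game: "turn_game V V1 V2 E"
    and n_def: "n = card V"
    and W_def: "W = Max ((\<lambda>e. \<bar>r e\<bar>) ` E)"
    and W_ge: "W \<ge> 1"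
    and v: "v \<in> V"
    and s1: "positional_strategy E V1 \<sigma>1" and t1: "positional_strategy E V2 \<tau>1"
    and s2: "positional_strategy E V1 \<sigma>2" and t2: "positional_strategy E V2 \<tau>2"
    and lam0_def: "lam0 = 1 - 1 / (24 * real_of_int W *
        real (2 * n + 1) powr (7 * real_of_int W powr (1/4) * sqrt (real n) + 6))"
    and ge0: "Disc lam0 r (play V1 \<sigma>1 \<tau>1 v) \<ge> Disc lam0 r (play V1 \<sigma>2 \<tau>2 v)"
  shows "\<forall>lam. lam0 \<le> lam \<and> lam < 1 \<longrightarrow>
           Disc lam r (play V1 \<sigma>1 \<tau>1 v) \<ge> Disc lam r (play V1 \<sigma>2 \<tau>2 v)"
proof (intro allI impI)
  fix lam assume lam: "lam0 \<le> lam \<and> lam < 1"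
  define p1 where "p1 = play V1 \<sigma>1 \<tau>1 v"
  define p2 where "p2 = play V1 \<sigma>2 \<tau>2 v"
  obtain a1 b1 where L1: "0 < b1" "a1 + b1 \<le> n" "\<forall>i\<ge>a1. p1 (i + b1) = p1 i"
    using play_lasso[OF game s1 t1 v] n_def p1_def by blast
  obtain a2 b2 where L2: "0 < b2" "a2 + b2 \<le> n" "\<forall>i\<ge>a2. p2 (i + b2) = p2 i"
    using play_lasso[OF game s2 t2 v] n_def p2_def by blast
  define e1 where "e1 i = r (p1 i, p1 (Suc i))" for i
  define e2 where "e2 i = r (p2 i, p2 (Suc i))" for i
  have finV: "finite V" using game by (simp add: turn_game_def)
  have finE: "finite E"
  proof -
    have "E \<subseteq> V \<times> V" using game by (simp add: turn_game_def)
    then show ?thesis using finV by (meson finite_SigmaI finite_subset)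
  qed
  have rW: "\<bar>r x\<bar> \<le> W" if "x \<in> E" for x
    unfolding W_def using finE that by (intro Max_ge) auto
  have eW1: "\<forall>i. \<bar>e1 i\<bar> \<le> W" unfolding e1_def p1_def using play_in_E[OF game s1 t1 v] rW by blast
  have eW2: "\<forall>i. \<bar>e2 i\<bar> \<le> W" unfolding e2_def p2_def using play_in_E[OF game s2 t2 v] rW by blast
  have per1: "\<forall>i\<ge>a1. e1 (i + b1) = e1 i"
  proof (intro allI impI)
    fix i assume "a1 \<le> i"
    then show "e1 (i + b1) = e1 i" using L1(3)[rule_format, of i] L1(3)[rule_format, of "Suc i"]
      by (simp add: e1_def)
  qed
  have per2: "\<forall>i\<ge>a2. e2 (i + b2) = e2 i"
  proof (intro allI impI)
    fix i assume "a2 \<le> i"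
    then show "e2 (i + b2) = e2 i" using L2(3)[rule_format, of i] L2(3)[rule_format, of "Suc i"]
      by (simp add: e2_def)
  qed
  have n1: "1 \<le> n"
  proof -
    have "V \<noteq> {}" using v by auto
    then show ?thesis using finV n_def by (simp add: Suc_le_eq card_gt_0_iff)
  qed
  define c where "c = cpoly b1 b2 e1 e2"
  have D1: "Disc l r p1 = (\<Sum>i. l^i * real_of_int (e1 i))" for l by (simp add: Disc_def e1_def)
  have D2: "Disc l r p2 = (\<Sum>i. l^i * real_of_int (e2 i))" for l by (simp add: Disc_def e2_def)
  have ident: "(1 - l^b1) * (1 - l^b2) * (Disc l r p1 - Disc l r p2) = (\<Sum>i<2*n. l^i * real_of_int (c i))"
    if "0 \<le> l" "l < 1" for l :: real
    unfolding D1 D2 c_def by (rule disc_poly[OF that eW1 eW2 per1 per2 L1(2) L2(2)])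
  have cz: "\<forall>i\<ge>2*n. c i = 0" unfolding c_def using cpoly_zero[OF per1 per2 L1(2) L2(2)] by blast
  have cH: "\<forall>i. \<bar>c i\<bar> \<le> 8 * W" unfolding c_def using cpoly_bound[OF eW1 eW2] by blast
  define x where "x = real_of_int W powr (1/4)"
  define B where "B = real (2 * n + 1)"
  define T where "T = 1 / (24 * real_of_int W * B powr (7 * x * sqrt (real n) + 6))"
  have W1r: "1 \<le> real_of_int W" using W_ge by simp
  have lam0T: "lam0 = 1 - T" by (simp add: lam0_def T_def B_def x_def)
  have T0: "0 < T" using W1r n1 by (simp add: T_def B_def)
  have T1: "T < 1"
  proof -
    have "1 \<le> B powr (7 * x * sqrt (real n) + 6)"
      using n1 by (intro ge_one_powr_ge_zero) (auto simp: B_def x_def)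
    then have "1 * 1 \<le> real_of_int W * B powr (7 * x * sqrt (real n) + 6)"
      using W1r by (intro mult_mono) auto
    then have "1 < 24 * real_of_int W * B powr (7 * x * sqrt (real n) + 6)" by linarith
    then show ?thesis by (simp add: T_def)
  qed
  have lampos: "0 < lam" using lam lam0T T1 by linarith
  have fpos: "0 < (1 - l^b1) * (1 - l^b2)" if "0 < l" "l < 1" for l :: real
  proof -
    have "l^b1 \<le> l^1" using that L1(1) by (intro power_decreasing) auto
    moreover have "l^b2 \<le> l^1" using that L2(1) by (intro power_decreasing) auto
    ultimately have "l^b1 < 1" "l^b2 < 1" using that by auto
    then show ?thesis by simp
  qed
  show "Disc lam r (play V1 \<sigma>2 \<tau>2 v) \<le> Disc lam r (play V1 \<sigma>1 \<tau>1 v)"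
  proof (cases "\<forall>i<2*n. c i = 0")
    case True
    have "(1 - lam^b1) * (1 - lam^b2) * (Disc lam r p1 - Disc lam r p2) = 0"
      using ident[of lam] lampos lam True by simp
    moreover have "(1 - lam^b1) * (1 - lam^b2) \<noteq> 0" using fpos[of lam] lampos lam by (simp only: less_irrefl) force
    ultimately have "Disc lam r p1 - Disc lam r p2 = 0" by (simp only: mult_eq_0_iff) blast
    then show ?thesis by (simp add: p1_def p2_def)
  next
    case False
    then obtain i1 where i1: "i1 < 2*n" "c i1 \<noteq> 0" by auto
    define s0 where "s0 = (LEAST i. c i \<noteq> 0)"
    have cs0: "c s0 \<noteq> 0" unfolding s0_def using i1(2) by (rule LeastI)
    have below: "\<forall>i<s0. c i = 0" unfolding s0_def using not_less_Least by blast
    define q where "q i = c (i + s0)" for i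
    define N where "N = 2 * n"
    have N0: "0 < N" using n1 by (simp add: N_def)
    have q0: "q 0 \<noteq> 0" using cs0 by (simp add: q_def)
    define H where "H = 8 * real_of_int W"
    have qH: "\<forall>i. \<bar>real_of_int (q i)\<bar> \<le> H"
    proof
      fix i
      have "real_of_int \<bar>c (i + s0)\<bar> \<le> real_of_int (8 * W)" using cH by (simp only: of_int_le_iff)
      then show "\<bar>real_of_int (q i)\<bar> \<le> H" by (simp add: q_def H_def)
    qed
    have shiftp: "(\<Sum>i<2*n. l^i * real_of_int (c i)) = l^s0 * (\<Sum>i<N. real_of_int (q i) * l^i)" for l :: real
      unfolding q_def N_def by (rule shift_poly[OF cz below])
    obtain j0 where "j0 < N" "mu q N j0 \<noteq> 0" using mu_nonzero_exists[where q=q and N=N, OF q0 N0] by blast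
    define k where "k = (LEAST j. mu q N j \<noteq> 0)"
    have muk: "mu q N k \<noteq> 0" unfolding k_def using \<open>mu q N j0 \<noteq> 0\<close> by (rule LeastI)
    have mu0: "\<forall>j<k. mu q N j = 0" unfolding k_def using not_less_Least by blast
    have kj0: "k \<le> j0" unfolding k_def using \<open>mu q N j0 \<noteq> 0\<close> by (rule Least_le)
    have kN: "k < N" using kj0 \<open>j0 < N\<close> by simp
    have kb: "real k \<le> 14 * real_of_int W powr (1/4) * sqrt (real n) + 9"
    proof (cases "n \<le> 50")
      case True
      show ?thesis using k_bound_small[OF W1r True] kN by (simp add: N_def)
    next
      case False
      then have n50: "50 < n" by simp
      define \<sigma> where "\<sigma> = 3 / sqrt (real n)"
      have sq7: "7 \<le> sqrt (real n)"
      proof -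
        have "sqrt 49 \<le> sqrt (real n)" using n50 by (subst real_sqrt_le_iff) simp
        then show ?thesis by simp
      qed
      have \<sigma>0: "0 < \<sigma>" using sq7 n50 by (simp add: \<sigma>_def)
      have \<sigma>1: "\<sigma> \<le> 1" using sq7 by (simp add: \<sigma>_def divide_le_eq)
      have "real k * (49/50) \<le> 5*pi/(4*\<sigma>) * ln (12*H) + ln (H * real N) + real N * \<sigma>"
        by (rule mult_bound[OF qH q0 N0 \<sigma>0 \<sigma>1 mu0])
      then have "real k * (49/50) \<le> 5*pi/(4*\<sigma>) * ln (12*(8*real_of_int W)) + ln (8*real_of_int W * real (2*n)) + real (2*n) * \<sigma>"
        by (simp add: H_def N_def)
      then show ?thesis by (rule k_bound_large[OF W1r n50 \<sigma>_def])
    qed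
    have kN2: "k < 2*n" using kN by (simp add: N_def)
    have Teq: "T = 1 / (24 * real_of_int W * real (2*n+1) powr (7 * real_of_int W powr (1/4) * sqrt (real n) + 6))"
      by (simp only: T_def B_def x_def)
    obtain s where s: "0 < s" "T \<le> s" "T * (8 * real_of_int W * real (2*n) * (1+s)^(2*n)) < s^(k+1)"
      using s_choice[OF n1 W1r kN2 kb] unfolding Teq by blast
    have cond: "T * (H * real N * (1+s)^N) < s^(k+1)" using s(3) by (simp add: H_def N_def)
    have sgn: "0 < (\<Sum>i<N. real_of_int (q i) * l^i) * ((-1)^k * real_of_int (mu q N k))"
      if "1 - T \<le> l" "l < 1" for l :: real
      by (rule sign_lemma[OF qH muk mu0 kN s(1) s(2) cond that])
    define Q where "Q l = (\<Sum>i<N. real_of_int (q i) * l^i)" for l :: real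
    define m where "m = (-1)^k * real_of_int (mu q N k)"
    have lam0pos: "0 < lam0" using lam0T T1 by linarith
    have lam01: "lam0 < 1" using lam0T T0 by linarith
    have "0 \<le> (1 - lam0^b1) * (1 - lam0^b2) * (Disc lam0 r p1 - Disc lam0 r p2)"
      using ge0 fpos[OF lam0pos lam01] by (simp add: p1_def p2_def)
    then have "0 \<le> lam0^s0 * Q lam0"
      using ident[of lam0] lam0pos lam01 shiftp[of lam0] by (simp add: Q_def)
    moreover have "0 < lam0^s0" using lam0pos by simp
    ultimately have Q0: "0 \<le> Q lam0" by (simp add: zero_le_mult_iff)
    have "0 < Q lam0 * m" using sgn[of lam0] lam0T lam01 by (simp add: Q_def m_def)
    then have m0: "0 < m" using Q0 by (simp add: zero_less_mult_iff)
    have "0 < Q lam * m" using sgn[of lam] lam lam0T by (simp add: Q_def m_def)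
    then have "0 < Q lam" using m0 by (simp add: zero_less_mult_iff)
    then have "0 < lam^s0 * Q lam" using lampos by simp
    then have "0 < (1 - lam^b1) * (1 - lam^b2) * (Disc lam r p1 - Disc lam r p2)"
      using ident[of lam] lampos lam shiftp[of lam] by (simp add: Q_def)
    moreover have "0 < (1 - lam^b1) * (1 - lam^b2)" using fpos[of lam] lampos lam by simp
    ultimately have "0 < Disc lam r p1 - Disc lam r p2"
      by (metis zero_less_mult_iff not_less_iff_gr_or_eq)
    then show ?thesis by (simp add: p1_def p2_def)
  qed
qed

end
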